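(* Let $d\ge3$, $F \leq F' \leq \mathrm{Sym}(\Omega)$ with $F$ semi-regular and $F'$ preserving each $F$-orbit, and let $n = [F':F]$. Fix a vertex $v_0$ of $T_d$. Then the stabilizer $K(F,F')$ of $v_0$ in $G(F,F')$ embeds as a cocompact lattice in the group $H_{n,d} = \mathfrak{S}_n^{V_d,\mathfrak{S}_{n-1}} \rtimes K_d$, where $K_d$ is the stabilizer of $v_0$ in $\mathrm{Aut}(T_d)$.
   Context: $\Omega$ is a set with $|\Omega|=d$; $T_d$ is the $d$-regular tree with vertex set $V_d$ and a coloring $c$ of its edges by $\Omega$ bijective on the edges at each vertex; local permutations $\sigma(g,v) = c|_{E(gv)}\circ g\circ (c|_{E(v)})^{-1}$. $G(F,F')$ is the (discrete, since $F$ is semi-regular) group of automorphisms of $T_d$ whose local permutations all lie in $F'$ and all but finitely many lie in $F$. A permutation group is semi-regular if point stabilizers are trivial. $\Sigma_n=\{0,\ldots,n-1\}$, $\mathfrak S_n=\mathrm{Sym}(\Sigma_n)$, $\mathfrak S_{n-1}$ the stabilizer of $0$; $\mathfrak{S}_n^{V_d,\mathfrak{S}_{n-1}}$ is the group of $(\sigma_v)_{v\in V_d}$ with $\sigma_v\in\mathfrak S_{n-1}$ for all but finitely many $v$, topologized so that the product group $\mathfrak{S}_{n-1}^{V_d}$ is a compact open subgroup; $H_{n,d}$ is the open subgroup of $G_{n,d}=\mathfrak{S}_n^{V_d,\mathfrak{S}_{n-1}}\rtimes\mathrm{Aut}(T_d)$ consisting of elements whose $\mathrm{Aut}(T_d)$-component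 fixes $v_0$. *)

theory Defs
  imports "HOL-Algebra.Algebra" "HOL-Analysis.Analysis"
begin

section \<open>The d-regular tree T_d with its legal colouring, Omega = the finite type 'a, d = CARD('a)\<close>

text \<open>Vertices of T_d: reduced words over Omega (no two consecutive letters equal).
  The neighbour of w along the edge of colour a is nbr a w; the edge {w, nbr a w}
  has colour a.\<close>

definition tree_vertices :: "'a list set" where
  "tree_vertices = {w. \<forall>i. Suc i < length w \<longrightarrow> w ! i \<noteq> w ! Suc i}"

definition nbr :: "'a \<Rightarrow> 'a list \<Rightarrow> 'a list" where
  "nbr a w = (if w \<noteq> [] \<and> hd w = a then tl w else a # w)"

definition tree_adj :: "'a list \<Rightarrow> 'a list \<Rightarrow> bool" where
  "tree_adj v w \<longleftrightarrow> (\<exists>a. w = nbr a v)"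

definition tree_aut :: "('a list \<Rightarrow> 'a list) set" where
  "tree_aut = {g. bij_betw g tree_vertices tree_vertices
      \<and> (\<forall>v\<in>tree_vertices. \<forall>w\<in>tree_vertices. tree_adj v w \<longleftrightarrow> tree_adj (g v) (g w))
      \<and> (\<forall>v. v \<notin> tree_vertices \<longrightarrow> g v = v)}"

text \<open>Local permutation sigma(g,v) = c|E(gv) o g o (c|E(v))^-1 : the colour of
  the edge g({v, nbr a v}) at g v.\<close>

definition local_perm :: "('a list \<Rightarrow> 'a list) \<Rightarrow> 'a list \<Rightarrow> 'a \<Rightarrow> 'a" where
  "local_perm g v a = (THE b. g (nbr a v) = nbr b (g v))"

text \<open>Sym(Omega) is BijGroup UNIV; permutation groups are subgroups of it.\<close>

definition semiregular :: "('a \<Rightarrow> 'a) set \<Rightarrow> bool" where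
  "semiregular F \<longleftrightarrow> (\<forall>f\<in>F. \<forall>x. f x = x \<longrightarrow> f = id)"

definition preserves_orbits :: "('a \<Rightarrow> 'a) set \<Rightarrow> ('a \<Rightarrow> 'a) set \<Rightarrow> bool" where
  "preserves_orbits F' F \<longleftrightarrow> (\<forall>f'\<in>F'. \<forall>x. f' x \<in> {f x | f. f \<in> F})"

definition GFF :: "('a \<Rightarrow> 'a) set \<Rightarrow> ('a \<Rightarrow> 'a) set \<Rightarrow> ('a list \<Rightarrow> 'a list) set" where
  "GFF F F' = {g \<in> tree_aut. (\<forall>v\<in>tree_vertices. local_perm g v \<in> F')
      \<and> finite {v \<in> tree_vertices. local_perm g v \<notin> F}}"

definition KFF_group :: "('a \<Rightarrow> 'a) set \<Rightarrow> ('a \<Rightarrow> 'a) set \<Rightarrow> 'a list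
    \<Rightarrow> ('a list \<Rightarrow> 'a list) monoid" where
  "KFF_group F F' v0 = \<lparr>carrier = {g \<in> GFF F F'. g v0 = v0}, Group.monoid.mult = (\<circ>), one = id\<rparr>"

text \<open>An element is a pair (sigma, g): sigma v is a permutation of Sigma_n = {0..<n}
  (identity for v outside the vertex set), sigma v fixes 0 for all but finitely many
  vertices v, and g is a tree automorphism fixing v0.\<close>

definition H_carrier :: "nat \<Rightarrow> 'a list \<Rightarrow> (('a list \<Rightarrow> nat \<Rightarrow> nat) \<times> ('a list \<Rightarrow> 'a list)) set" where
  "H_carrier n v0 = {(\<sigma>, g). (\<forall>v\<in>tree_vertices. \<sigma> v permutes {..<n})
      \<and> (\<forall>v. v \<notin> tree_vertices \<longrightarrow> \<sigma> v = id)
      \<and> finite {v \<in> tree_vertices. \<sigma> v 0 \<noteq> 0}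
      \<and> g \<in> tree_aut \<and> g v0 = v0}"

definition shift_act :: "('a list \<Rightarrow> 'a list) \<Rightarrow> ('a list \<Rightarrow> nat \<Rightarrow> nat) \<Rightarrow> ('a list \<Rightarrow> nat \<Rightarrow> nat)" where
  "shift_act g \<tau> = (\<lambda>v. if v \<in> tree_vertices then \<tau> (inv_into tree_vertices g v) else id)"

definition H_group :: "nat \<Rightarrow> 'a list
    \<Rightarrow> (('a list \<Rightarrow> nat \<Rightarrow> nat) \<times> ('a list \<Rightarrow> 'a list)) monoid" where
  "H_group n v0 = \<lparr>carrier = H_carrier n v0,
      Group.monoid.mult = (\<lambda>(\<sigma>, g) (\<tau>, h). ((\<lambda>v. \<sigma> v \<circ> shift_act g \<tau> v), g \<circ> h)),
      one = ((\<lambda>v. id), id)\<rparr>"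

text \<open>Topology of H_{n,d}: the product of the topology of the restricted product
  (in which the product group S_{n-1}^V, with its product topology, is compact open)
  and the permutation (pointwise convergence) topology of K_d. A basis of
  neighbourhoods of (sigma, g) is given, for finite sets S of vertices, by the elements
  (tau, k) with tau lying in the coset sigma.S_{n-1}^V (i.e. tau v 0 = sigma v 0 for all v)
  and agreeing with (sigma, g) on S.\<close>

definition H_basic_open :: "nat \<Rightarrow> 'a list \<Rightarrow> ('a list \<Rightarrow> nat \<Rightarrow> nat) \<Rightarrow> ('a list \<Rightarrow> 'a list)
    \<Rightarrow> 'a list set \<Rightarrow> (('a list \<Rightarrow> nat \<Rightarrow> nat) \<times> ('a list \<Rightarrow> 'a list)) set" where
  "H_basic_open n v0 \<sigma> g S = {(\<tau>, k) \<in> H_carrier n v0.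
      (\<forall>v\<in>tree_vertices. \<tau> v 0 = \<sigma> v 0) \<and> (\<forall>v\<in>S. \<tau> v = \<sigma> v \<and> k v = g v)}"

definition H_topology :: "nat \<Rightarrow> 'a list
    \<Rightarrow> (('a list \<Rightarrow> nat \<Rightarrow> nat) \<times> ('a list \<Rightarrow> 'a list)) topology" where
  "H_topology n v0 = topology_generated_by
     {H_basic_open n v0 \<sigma> g S | \<sigma> g S. (\<sigma>, g) \<in> H_carrier n v0 \<and> finite S \<and> S \<subseteq> tree_vertices}"

text \<open>A cocompact lattice in a locally compact group H: a discrete subgroup Gamma
  such that H / Gamma is compact, i.e. H = C Gamma for some compact set C.\<close>

definition cocompact_lattice :: "('g, 'b) monoid_scheme \<Rightarrow> 'g topology \<Rightarrow> 'g set \<Rightarrow> bool" where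
  "cocompact_lattice H T \<Gamma> \<longleftrightarrow> subgroup \<Gamma> H
     \<and> (\<forall>x\<in>\<Gamma>. \<exists>U. openin T U \<and> U \<inter> \<Gamma> = {x})
     \<and> (\<exists>C. compactin T C \<and> carrier H = {c \<otimes>\<^bsub>H\<^esub> \<gamma> | c \<gamma>. c \<in> C \<and> \<gamma> \<in> \<Gamma>})"

end

theory Submission
  imports Defs
begin

abbreviation "tv \<equiv> tree_vertices"

lemma tv_Nil[simp]: "[] \<in> tv" by (simp add: tree_vertices_def)

lemma tv_Cons: "(a # w \<in> tv) = (w \<in> tv \<and> (w = [] \<or> hd w \<noteq> a))"
proof
  assume H: "a # w \<in> tv"
  have "\<forall>i. Suc i < length w \<longrightarrow> w ! i \<noteq> w ! Suc i"
  proof (intro allI impI)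
    fix i assume "Suc i < length w"
    then have "Suc (Suc i) < length (a#w)" by simp
    then have "(a#w) ! Suc i \<noteq> (a#w) ! Suc (Suc i)" using H unfolding tree_vertices_def by blast
    then show "w ! i \<noteq> w ! Suc i" by simp
  qed
  moreover have "w = [] \<or> hd w \<noteq> a"
  proof (cases w)
    case (Cons b ws)
    have "Suc 0 < length (a#w)" using Cons by simp
    then have "(a#w)!0 \<noteq> (a#w)!Suc 0" using H unfolding tree_vertices_def by blast
    then show ?thesis using Cons by simp
  qed simp
  ultimately show "w \<in> tv \<and> (w = [] \<or> hd w \<noteq> a)" unfolding tree_vertices_def by simp
next
  assume H: "w \<in> tv \<and> (w = [] \<or> hd w \<noteq> a)"
  show "a # w \<in> tv" unfolding tree_vertices_def
  proof (intro CollectI allI impI)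
    fix i assume i: "Suc i < length (a#w)"
    show "(a#w)!i \<noteq> (a#w)!Suc i"
    proof (cases i)
      case 0 then show ?thesis using H i by (cases w) auto
    next
      case (Suc j) then show ?thesis using H i unfolding tree_vertices_def by auto
    qed
  qed
qed

lemma nbr_tv[simp]: "w \<in> tv \<Longrightarrow> nbr a w \<in> tv"
  by (cases w) (auto simp: nbr_def tv_Cons)

lemma nbr_Cons_self[simp]: "nbr a (a # w) = w"
  by (simp add: nbr_def)

lemma nbr_nbr[simp]: "w \<in> tv \<Longrightarrow> nbr a (nbr a w) = w"
  by (cases w) (auto simp: nbr_def tv_Cons)

lemma nbr_inj: "nbr a w = nbr b w \<Longrightarrow> a = b"
  by (cases w) (auto simp: nbr_def split: if_splits)

lemma nbr_fresh: "w \<in> tv \<Longrightarrow> (w = [] \<or> hd w \<noteq> a) \<Longrightarrow> nbr a w = a # w"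
  by (auto simp: nbr_def)

lemma tv_rev: "w \<in> tv \<Longrightarrow> rev w \<in> tv"
  unfolding tree_vertices_def
proof (clarsimp)
  fix i assume H: "\<forall>i. Suc i < length w \<longrightarrow> w ! i \<noteq> w ! Suc i" and i: "Suc i < length w"
    and E: "rev w ! i = rev w ! Suc i"
  define j where "j = length w - Suc (Suc i)"
  have "Suc j < length w" "Suc j = length w - Suc i" using i by (auto simp: j_def)
  moreover have "w ! j \<noteq> w ! Suc j" using H \<open>Suc j < length w\<close> by blast
  moreover have "rev w ! i = w ! Suc j" "rev w ! Suc i = w ! j"
    using i \<open>Suc j = length w - Suc i\<close> by (auto simp: rev_nth j_def)
  ultimately show False using E by simp
qed

definition Rm :: "'a list \<Rightarrow> 'a list \<Rightarrow> 'a list" where "Rm u w = foldr nbr w u"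

lemma Rm_Nil[simp]: "Rm u [] = u" by (simp add: Rm_def)
lemma Rm_Cons[simp]: "Rm u (a#w) = nbr a (Rm u w)" by (simp add: Rm_def)
lemma Rm_tv[simp]: "u \<in> tv \<Longrightarrow> Rm u w \<in> tv" by (induction w) auto

lemma Rm_nbr: assumes "u \<in> tv" "w \<in> tv" shows "Rm u (nbr a w) = nbr a (Rm u w)"
proof (cases "w \<noteq> [] \<and> hd w = a")
  case True
  then obtain w' where w: "w = a # w'" by (cases w) auto
  then show ?thesis using assms by simp
next
  case False then have "nbr a w = a # w" unfolding nbr_def by auto
  then show ?thesis by simp
qed

lemma foldr_rev_cancel: "foldr nbr (rev xs) (xs @ ys) = ys"
  by (induction xs) auto

lemma colour_pres_id:
  assumes "f [] = []" "\<And>w a. w \<in> tv \<Longrightarrow> f (nbr a w) = nbr a (f w)" "w \<in> tv"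
  shows "f w = w"
  using assms(3)
proof (induction w)
  case (Cons a w)
  then have "w \<in> tv" "w = [] \<or> hd w \<noteq> a" by (auto simp: tv_Cons)
  then have "nbr a w = a # w" by (rule nbr_fresh)
  then show ?case using assms(2)[of w a] Cons \<open>w \<in> tv\<close> by simp
qed (simp add: assms)

lemma Rm_inv1: fixes u :: "'a list" assumes "u \<in> tv" "w \<in> tv" shows "Rm (rev u) (Rm u w) = w"
proof (rule colour_pres_id[where f="\<lambda>w. Rm (rev u) (Rm u w)", OF _ _ assms(2)])
  show "Rm (rev u) (Rm u []) = []" using foldr_rev_cancel[of "rev u" "[]"] by (simp add: Rm_def)
  fix w :: "'a list" and a assume "w \<in> tv" then show "Rm (rev u) (Rm u (nbr a w)) = nbr a (Rm (rev u) (Rm u w))"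
    using Rm_nbr[OF assms(1) \<open>w \<in> tv\<close>] Rm_nbr[OF tv_rev[OF assms(1)] Rm_tv[OF assms(1)]] by simp
qed

lemma Rm_inv2: fixes u :: "'a list" assumes "u \<in> tv" "w \<in> tv" shows "Rm u (Rm (rev u) w) = w"
proof (rule colour_pres_id[where f="\<lambda>w. Rm u (Rm (rev u) w)", OF _ _ assms(2)])
  show "Rm u (Rm (rev u) []) = []" using foldr_rev_cancel[of "u" "[]"] by (simp add: Rm_def)
  fix w :: "'a list" and a assume "w \<in> tv" then show "Rm u (Rm (rev u) (nbr a w)) = nbr a (Rm u (Rm (rev u) w))"
    using Rm_nbr[OF tv_rev[OF assms(1)] \<open>w \<in> tv\<close>] Rm_nbr[OF assms(1) Rm_tv[OF tv_rev[OF assms(1)]]] by simp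
qed

lemma reach:
  assumes "v0 \<in> tv" "P v0" "\<And>v a. v \<in> tv \<Longrightarrow> P v \<Longrightarrow> P (nbr a v)" "w \<in> tv"
  shows "P w"
proof -
  have "P []" using assms(1,2)
  proof (induction v0)
    case (Cons a v) then show ?case using assms(3)[of "a#v" a] by (simp add: tv_Cons)
  qed simp
  then show ?thesis using assms(4)
  proof (induction w)
    case (Cons a w)
    then have "w \<in> tv" "w = [] \<or> hd w \<noteq> a" by (auto simp: tv_Cons)
    moreover have "P w" using Cons \<open>w \<in> tv\<close> by simp
    ultimately have "P (nbr a w)" using assms(3) by blast
    then show ?case using nbr_fresh[OF \<open>w \<in> tv\<close> \<open>w = [] \<or> hd w \<noteq> a\<close>] by simp
  qed
qed


section \<open>Automorphisms and local permutations\<close>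

lemma aut_bij: "g \<in> tree_aut \<Longrightarrow> bij_betw g tv tv" by (simp add: tree_aut_def)
lemma aut_tv: "g \<in> tree_aut \<Longrightarrow> v \<in> tv \<Longrightarrow> g v \<in> tv"
  by (rule bij_betw_apply[OF aut_bij])
lemma aut_inj: "g \<in> tree_aut \<Longrightarrow> inj_on g tv" by (rule bij_betw_imp_inj_on[OF aut_bij])
lemma aut_out: "g \<in> tree_aut \<Longrightarrow> v \<notin> tv \<Longrightarrow> g v = v" by (simp add: tree_aut_def)
lemma aut_adj: "g \<in> tree_aut \<Longrightarrow> v \<in> tv \<Longrightarrow> w \<in> tv \<Longrightarrow> tree_adj (g v) (g w) = tree_adj v w"
  by (simp add: tree_aut_def)
lemma aut_surj: "g \<in> tree_aut \<Longrightarrow> v \<in> tv \<Longrightarrow> \<exists>w\<in>tv. g w = v"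
  using aut_bij by (metis bij_betw_imp_surj_on imageE)

lemma lp_char: "(\<And>a. g (nbr a v) = nbr (f a) (g v)) \<Longrightarrow> local_perm g v = f"
proof
  fix a assume H: "\<And>a. g (nbr a v) = nbr (f a) (g v)"
  show "local_perm g v a = f a" unfolding local_perm_def
  proof (rule the_equality)
    show "g (nbr a v) = nbr (f a) (g v)" by (rule H)
    fix b assume "g (nbr a v) = nbr b (g v)"
    then have "nbr b (g v) = nbr (f a) (g v)" using H by simp
    then show "b = f a" by (rule nbr_inj)
  qed
qed

lemma lp_eq: assumes "g \<in> tree_aut" "v \<in> tv" shows "g (nbr a v) = nbr (local_perm g v a) (g v)"
proof -
  have "tree_adj v (nbr a v)" by (auto simp: tree_adj_def)
  then have "tree_adj (g v) (g (nbr a v))" using aut_adj[OF assms(1) assms(2) nbr_tv[OF assms(2)]] by simp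
  then obtain b where b: "g (nbr a v) = nbr b (g v)" by (auto simp: tree_adj_def)
  have "local_perm g v a = b" unfolding local_perm_def
  proof (rule the_equality)
    show "g (nbr a v) = nbr b (g v)" by (rule b)
    fix c assume "g (nbr a v) = nbr c (g v)"
    then have "nbr c (g v) = nbr b (g v)" using b by simp
    then show "c = b" by (rule nbr_inj)
  qed
  then show ?thesis using b by simp
qed

lemma lp_inj: assumes "g \<in> tree_aut" "v \<in> tv" shows "inj (local_perm g v)"
proof
  fix a b assume "local_perm g v a = local_perm g v b"
  then have "g (nbr a v) = g (nbr b v)" using lp_eq[OF assms] by metis
  then have "nbr a v = nbr b v" using aut_inj[OF assms(1)] assms(2) by (meson inj_on_def nbr_tv)
  then show "a = b" by (rule nbr_inj)
qed

lemma lp_bij: assumes "g \<in> tree_aut" "v \<in> tv" shows "bij (local_perm (g::'a::finite list \<Rightarrow> _) v)"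
  using lp_inj[OF assms] finite_UNIV_inj_surj[of "local_perm g v"] by (simp add: bij_def)

lemma lp_back: assumes "g \<in> tree_aut" "v \<in> tv" shows "local_perm g (nbr a v) a = local_perm g v a"
proof -
  have nv: "nbr a v \<in> tv" using assms(2) by simp
  have e1: "g (nbr a (nbr a v)) = nbr (local_perm g (nbr a v) a) (g (nbr a v))" by (rule lp_eq[OF assms(1) nv])
  have e2: "g (nbr a v) = nbr (local_perm g v a) (g v)" by (rule lp_eq[OF assms])
  have "g v = nbr (local_perm g (nbr a v) a) (nbr (local_perm g v a) (g v))"
    using e1 e2 assms(2) by simp
  then have "nbr (local_perm g (nbr a v) a) (g v) = nbr (local_perm g (nbr a v) a) (nbr (local_perm g (nbr a v) a) (nbr (local_perm g v a) (g v)))"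
    by simp
  also have "\<dots> = nbr (local_perm g v a) (g v)" using aut_tv[OF assms] by simp
  finally show ?thesis by (rule nbr_inj)
qed

lemma lp_comp: assumes "g \<in> tree_aut" "h \<in> tree_aut" "v \<in> tv"
  shows "local_perm (g \<circ> h) v = local_perm g (h v) \<circ> local_perm h v"
  by (rule lp_char) (simp add: lp_eq assms aut_tv)

lemma lp_id: "local_perm id v = id"
  by (rule lp_char) simp

lemma aut_comp: fixes g h :: "'a list \<Rightarrow> 'a list" assumes "g \<in> tree_aut" "h \<in> tree_aut" shows "g \<circ> h \<in> tree_aut"
  unfolding tree_aut_def
proof (intro CollectI conjI ballI allI impI)
  show "bij_betw (g \<circ> h) tv tv" using bij_betw_trans[OF aut_bij[OF assms(2)] aut_bij[OF assms(1)]] .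
  fix v w :: "'a list" assume "v \<in> tv" "w \<in> tv"
  then show "tree_adj v w = tree_adj ((g \<circ> h) v) ((g \<circ> h) w)"
    using aut_adj[OF assms(2)] aut_adj[OF assms(1)] aut_tv[OF assms(2)] by simp
next
  fix v :: "'a list" assume "v \<notin> tv" then show "(g \<circ> h) v = v" using aut_out[OF assms(1)] aut_out[OF assms(2)] by simp
qed

lemma id_aut: "id \<in> tree_aut" by (simp add: tree_aut_def)

definition ginv :: "('a list \<Rightarrow> 'a list) \<Rightarrow> 'a list \<Rightarrow> 'a list" where
  "ginv g = (\<lambda>v. if v \<in> tv then inv_into tv g v else v)"

lemma ginv_out[simp]: "v \<notin> tv \<Longrightarrow> ginv g v = v" by (simp add: ginv_def)

lemma ginv_tv: "g \<in> tree_aut \<Longrightarrow> v \<in> tv \<Longrightarrow> ginv g v \<in> tv"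
  using bij_betw_apply[OF bij_betw_inv_into[OF aut_bij]] by (simp add: ginv_def)

lemma ginv_left[simp]: "g \<in> tree_aut \<Longrightarrow> v \<in> tv \<Longrightarrow> ginv g (g v) = v"
  using bij_betw_inv_into_left[OF aut_bij] by (simp add: ginv_def aut_tv)

lemma ginv_right[simp]: "g \<in> tree_aut \<Longrightarrow> v \<in> tv \<Longrightarrow> g (ginv g v) = v"
  using bij_betw_inv_into_right[OF aut_bij] by (simp add: ginv_def)

lemma aut_ginv: fixes g :: "'a list \<Rightarrow> 'a list" assumes "g \<in> tree_aut" shows "ginv g \<in> tree_aut"
  unfolding tree_aut_def
proof (intro CollectI conjI ballI allI impI)
  have "bij_betw (inv_into tv g) tv tv" using aut_bij[OF assms] by (rule bij_betw_inv_into)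
  then show "bij_betw (ginv g) tv tv" by (rule bij_betw_cong[THEN iffD1, rotated]) (simp add: ginv_def)
next
  fix v w :: "'a list" assume vw: "v \<in> tv" "w \<in> tv"
  show "tree_adj v w = tree_adj (ginv g v) (ginv g w)"
    using aut_adj[OF assms ginv_tv[OF assms vw(1)] ginv_tv[OF assms vw(2)]] vw assms by simp
next
  fix v :: "'a list" assume "v \<notin> tv" then show "ginv g v = v" by (simp add: ginv_def)
qed

lemma ginv_comp1: assumes "g \<in> tree_aut" shows "ginv g \<circ> g = id"
proof
  fix x show "(ginv g \<circ> g) x = id x"
    using assms by (cases "x \<in> tv") (simp_all add: aut_out ginv_out aut_tv)
qed

lemma ginv_comp2: assumes "g \<in> tree_aut" shows "g \<circ> ginv g = id"
proof
  fix x show "(g \<circ> ginv g) x = id x"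
    using assms by (cases "x \<in> tv") (simp_all add: aut_out ginv_out aut_tv)
qed

lemma ginv_inv_into: "v \<in> tv \<Longrightarrow> inv_into tv g v = ginv g v"
  by (simp add: ginv_def)

lemma ginv_comp: assumes "g \<in> tree_aut" "h \<in> tree_aut" "v \<in> tv"
  shows "ginv (g \<circ> h) v = ginv h (ginv g v)"
proof -
  have "g \<circ> h \<in> tree_aut" using aut_comp assms by blast
  then have 1: "ginv (g \<circ> h) ((g \<circ> h) (ginv h (ginv g v))) = ginv h (ginv g v)"
    by (rule ginv_left) (simp add: ginv_tv assms)
  have 2: "(g \<circ> h) (ginv h (ginv g v)) = v" using assms by (simp add: ginv_tv)
  from 1 show ?thesis unfolding 2 .
qed

lemma ginv_ginv: assumes "g \<in> tree_aut" "v \<in> tv" shows "ginv (ginv g) v = g v"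
proof -
  have e: "ginv g (g v) = v" by (rule ginv_left[OF assms])
  from ginv_left[OF aut_ginv[OF assms(1)] aut_tv[OF assms]] show ?thesis unfolding e .
qed

lemma lp_ginv: assumes "g \<in> tree_aut" "v \<in> tv"
  shows "local_perm (ginv g) (g v) = inv_into UNIV (local_perm g v)"
proof -
  have "local_perm (ginv g) (g v) \<circ> local_perm g v = local_perm (ginv g \<circ> g) v"
    using lp_comp[OF aut_ginv[OF assms(1)] assms(1) assms(2)] by simp
  also have "\<dots> = id" by (simp add: ginv_comp1[OF assms(1)] lp_id)
  finally have 1: "local_perm (ginv g) (g v) \<circ> local_perm g v = id" .
  have "local_perm g v \<circ> local_perm (ginv g) (g v) = local_perm (g \<circ> ginv g) (g v)"
    using lp_comp[OF assms(1) aut_ginv[OF assms(1)] aut_tv[OF assms]] assms by simp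
  also have "\<dots> = id" by (simp add: ginv_comp2[OF assms(1)] lp_id)
  finally have 2: "local_perm g v \<circ> local_perm (ginv g) (g v) = id" .
  show ?thesis using inv_unique_comp[OF 2 1] by simp
qed

lemma aut_eq:
  assumes "x \<in> tree_aut" "y \<in> tree_aut" "\<And>v. v \<in> tv \<Longrightarrow> x v = y v" shows "x = y"
proof
  fix v show "x v = y v" by (cases "v \<in> tv") (simp_all add: assms aut_out)
qed


abbreviation pinv :: "('a \<Rightarrow> 'a) \<Rightarrow> ('a \<Rightarrow> 'a)" where "pinv f \<equiv> inv_into UNIV f"

lemma bg_carrier: "carrier (BijGroup (UNIV::'a set)) = {f. bij f}"
  by (auto simp: BijGroup_def Bij_def extensional_def)

lemma bg_mult: "bij f \<Longrightarrow> bij g \<Longrightarrow> f \<otimes>\<^bsub>BijGroup (UNIV::'a set)\<^esub> g = f \<circ> g"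
  by (auto simp: BijGroup_def Bij_def extensional_def compose_def)

lemma bg_one: "\<one>\<^bsub>BijGroup (UNIV::'a set)\<^esub> = id"
  by (auto simp: BijGroup_def)

lemma bg_inv: "bij f \<Longrightarrow> m_inv (BijGroup (UNIV::'a set)) f = pinv f"
  by (subst inv_BijGroup) (auto simp: Bij_def extensional_def)

lemma sg_bij: "subgroup S (BijGroup (UNIV::'a set)) \<Longrightarrow> f \<in> S \<Longrightarrow> bij f"
  using subgroup.subset bg_carrier by blast

lemma sg_id: "subgroup S (BijGroup (UNIV::'a set)) \<Longrightarrow> id \<in> S"
  using subgroup.one_closed bg_one by metis

lemma sg_comp: "subgroup S (BijGroup (UNIV::'a set)) \<Longrightarrow> f \<in> S \<Longrightarrow> g \<in> S \<Longrightarrow> f \<circ> g \<in> S"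
  using subgroup.m_closed[of S "BijGroup UNIV" f g] bg_mult sg_bij by metis

lemma sg_inv: "subgroup S (BijGroup (UNIV::'a set)) \<Longrightarrow> f \<in> S \<Longrightarrow> pinv f \<in> S"
  using subgroup.m_inv_closed[of S "BijGroup UNIV" f] bg_inv sg_bij by metis

lemma pinv_comp1: "bij f \<Longrightarrow> pinv f \<circ> f = id"
  by (simp add: bij_is_inj)
lemma pinv_comp2: "bij f \<Longrightarrow> f \<circ> pinv f = id"
  using bij_is_surj surj_iff by blast
lemma pinv_bij: "bij f \<Longrightarrow> bij (pinv f)" by (rule bij_imp_bij_inv)

definition sw :: "'b \<Rightarrow> 'b \<Rightarrow> 'b \<Rightarrow> 'b" where
  "sw i j = (\<lambda>k. if k = i then j else if k = j then i else k)"

lemma sw_sw[simp]: "sw i j (sw i j k) = k" by (simp add: sw_def)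
lemma sw_bij: "bij (sw i j)" by (rule bij_betw_byWitness[where f'="sw i j"]) auto
lemma sw_bij_betw: "i \<in> A \<Longrightarrow> j \<in> A \<Longrightarrow> bij_betw (sw i j) A A"
  by (rule bij_betw_byWitness[where f'="sw i j"]) (auto simp: sw_def)



section \<open>Building automorphisms from local data\<close>

lemma Rm_rev_self: "Rm (rev u) u = []"
  using foldr_rev_cancel[of "rev u" "[]"] by (simp add: Rm_def)

lemma aut_intro:
  fixes g :: "'a list \<Rightarrow> 'a list"
  assumes bij: "bij_betw g tv tv" and out: "\<And>v. v \<notin> tv \<Longrightarrow> g v = v"
    and loc: "\<And>v a. v \<in> tv \<Longrightarrow> g (nbr a v) = nbr (s v a) (g v)"
    and sb: "\<And>v. v \<in> tv \<Longrightarrow> bij (s v)"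
  shows "g \<in> tree_aut"
  unfolding tree_aut_def
proof (intro CollectI conjI ballI allI impI)
  show "bij_betw g tv tv" by (rule bij)
  fix v w :: "'a list" assume v: "v \<in> tv" and w: "w \<in> tv"
  show "tree_adj v w = tree_adj (g v) (g w)"
  proof
    assume "tree_adj v w" then obtain a where "w = nbr a v" by (auto simp: tree_adj_def)
    then show "tree_adj (g v) (g w)" using loc[OF v] by (auto simp: tree_adj_def)
  next
    assume "tree_adj (g v) (g w)" then obtain b where b: "g w = nbr b (g v)" by (auto simp: tree_adj_def)
    define a where "a = pinv (s v) b"
    have "s v a = b" using sb[OF v] by (simp add: a_def bij_is_surj surj_f_inv_f)
    then have "g (nbr a v) = g w" using loc[OF v] b by simp
    then have "nbr a v = w" using bij_betw_imp_inj_on[OF bij] v w by (simp add: inj_on_eq_iff)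
    then show "tree_adj v w" by (auto simp: tree_adj_def)
  qed
next
  fix v :: "'a list" assume "v \<notin> tv" then show "g v = v" by (rule out)
qed

fun Lr :: "('a \<Rightarrow> 'a) \<Rightarrow> ('a list \<Rightarrow> 'a \<Rightarrow> 'a \<Rightarrow> ('a \<Rightarrow> 'a)) \<Rightarrow> 'a list \<Rightarrow> 'a list \<Rightarrow> ('a \<Rightarrow> 'a)" where
  "Lr r ch u [] = r"
| "Lr r ch u (a # w) = ch (Rm u (a # w)) a (Lr r ch u w a)"

fun g0 :: "('a \<Rightarrow> 'a) \<Rightarrow> ('a list \<Rightarrow> 'a \<Rightarrow> 'a \<Rightarrow> ('a \<Rightarrow> 'a)) \<Rightarrow> 'a list \<Rightarrow> 'a list \<Rightarrow> 'a list" where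
  "g0 r ch u [] = []"
| "g0 r ch u (a # w) = nbr (Lr r ch u w a) (g0 r ch u w)"

definition Build :: "('a \<Rightarrow> 'a) \<Rightarrow> ('a list \<Rightarrow> 'a \<Rightarrow> 'a \<Rightarrow> ('a \<Rightarrow> 'a)) \<Rightarrow> 'a list \<Rightarrow> 'a list \<Rightarrow> 'a list" where
  "Build r ch u = (\<lambda>v. if v \<in> tv then Rm u (g0 r ch u (Rm (rev u) v)) else v)"

locale build =
  fixes r :: "'a \<Rightarrow> 'a" and ch :: "'a list \<Rightarrow> 'a \<Rightarrow> 'a \<Rightarrow> ('a \<Rightarrow> 'a)" and u :: "'a list"
  assumes r_bij: "bij r" and ch_bij: "\<And>w a b. bij (ch w a b)" and ch_val: "\<And>w a b. ch w a b a = b"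
    and u_tv: "u \<in> tv"
begin

abbreviation "L \<equiv> Lr r ch u"
abbreviation "G \<equiv> g0 r ch u"

lemma L_bij: "bij (L w)" by (induction w) (simp_all add: r_bij ch_bij)

lemma L_back: "L (a # w) a = L w a" by (simp add: ch_val)

lemma G_cons: "w \<in> tv \<Longrightarrow> G w \<in> tv \<and> length (G w) = length w \<and> (\<forall>b w'. w = b # w' \<longrightarrow> G w = L w' b # G w')"
proof (induction w)
  case Nil then show ?case by simp
next
  case (Cons a w)
  then have w: "w \<in> tv" "w = [] \<or> hd w \<noteq> a" by (auto simp: tv_Cons)
  then have IH: "G w \<in> tv" "length (G w) = length w" "\<forall>b w'. w = b # w' \<longrightarrow> G w = L w' b # G w'"
    using Cons.IH by auto
  have fresh: "G w = [] \<or> hd (G w) \<noteq> L w a"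
  proof (cases w)
    case (Cons b w')
    then have "G w = L w' b # G w'" using IH by simp
    moreover have "L w' b = L w b" using Cons L_back by simp
    moreover have "a \<noteq> b" using w Cons by simp
    ultimately show ?thesis using L_bij[of w] by (simp add: bij_is_inj inj_eq)
  qed (simp)
  have e: "G (a # w) = L w a # G w" using nbr_fresh[OF IH(1) fresh] by simp
  have t: "G (a#w) \<in> tv" using nbr_tv[OF IH(1)] by simp
  have l: "length (G (a#w)) = length (a#w)" using e IH(2) by simp
  have c: "\<forall>b w'. a#w = b#w' \<longrightarrow> G (a#w) = L w' b # G w'" using e by simp
  show ?case using t l c by blast
qed

lemma G_tv: "w \<in> tv \<Longrightarrow> G w \<in> tv" using G_cons by blast

lemma G_nbr: assumes "w \<in> tv" shows "G (nbr a w) = nbr (L w a) (G w)"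
proof (cases "w \<noteq> [] \<and> hd w = a")
  case True
  then obtain w' where w: "w = a # w'" by (cases w) auto
  then have "w' \<in> tv" using assms by (simp add: tv_Cons)
  then show ?thesis using w G_tv by (simp add: ch_val)
next
  case False then have "nbr a w = a # w" unfolding nbr_def by auto
  then show ?thesis by simp
qed

lemma G_inj: "w \<in> tv \<Longrightarrow> w' \<in> tv \<Longrightarrow> G w = G w' \<Longrightarrow> w = w'"
proof (induction w arbitrary: w')
  case Nil then show ?case using G_cons[of w'] by auto
next
  case (Cons a w)
  have l: "length (G (a#w)) = length (a#w)" using G_cons[OF Cons.prems(1)] by blast
  have l2: "length (G w') = length w'" using G_cons[OF Cons.prems(2)] by blast
  have "w' \<noteq> []" using l l2 Cons.prems(3) by (auto simp del: g0.simps)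
  then obtain b w2 where w': "w' = b # w2" by (cases w') auto
  have e1: "G (a#w) = L w a # G w" using G_cons[OF Cons.prems(1)] by simp
  have e2: "G (b#w2) = L w2 b # G w2" using G_cons[of w'] Cons.prems w' by simp
  have "G w = G w2" using e1 e2 Cons.prems w' by simp
  moreover have "w \<in> tv" "w2 \<in> tv" using Cons.prems w' by (auto simp: tv_Cons)
  ultimately have "w = w2" using Cons.IH by blast
  then have "L w a = L w b" using e1 e2 Cons.prems w' by simp
  then have "a = b" using L_bij[of w] by (simp add: bij_is_inj inj_eq)
  then show ?case using w' \<open>w = w2\<close> by simp
qed

lemma G_surj: "y \<in> tv \<Longrightarrow> \<exists>w\<in>tv. G w = y"
proof (induction y)
  case Nil then show ?case by (intro bexI[of _ "[]"]) simp_all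
next
  case (Cons b y)
  then have y: "y \<in> tv" "y = [] \<or> hd y \<noteq> b" by (auto simp: tv_Cons)
  then obtain w where w: "w \<in> tv" "G w = y" using Cons.IH by blast
  define a where "a = pinv (L w) b"
  have La: "L w a = b" using L_bij[of w] by (simp add: a_def bij_is_surj surj_f_inv_f)
  have "a # w \<in> tv"
  proof (cases w)
    case (Cons c w')
    then have "G w = L w' c # G w'" using G_cons[OF w(1)] by simp
    then have yy: "y = L w' c # G w'" using w(2) by simp
    then have "hd y = L w c" using Cons L_back by simp
    moreover have "y \<noteq> []" using yy by simp
    ultimately have "L w c \<noteq> L w a" using y La by simp
    then have "c \<noteq> a" by blast
    then show ?thesis using w Cons by (simp add: tv_Cons)
  qed (simp add: tv_Cons)
  moreover have "G (a # w) = b # y" using G_cons[OF \<open>a # w \<in> tv\<close>] w La by simp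
  ultimately show ?case by blast
qed

abbreviation "B \<equiv> Build r ch u"

lemma B_tv: "v \<in> tv \<Longrightarrow> B v \<in> tv"
  by (simp add: Build_def u_tv tv_rev G_tv)

lemma B_nbr: assumes "v \<in> tv" shows "B (nbr a v) = nbr (L (Rm (rev u) v) a) (B v)"
proof -
  have "Rm (rev u) (nbr a v) = nbr a (Rm (rev u) v)" by (rule Rm_nbr[OF tv_rev[OF u_tv] assms])
  then have "G (Rm (rev u) (nbr a v)) = nbr (L (Rm (rev u) v) a) (G (Rm (rev u) v))"
    using G_nbr[OF Rm_tv[OF tv_rev[OF u_tv]]] by simp
  then show ?thesis using assms Rm_nbr[OF u_tv G_tv[OF Rm_tv[OF tv_rev[OF u_tv]]]]
    by (simp add: Build_def)
qed

lemma B_u: "B u = u" using u_tv by (simp add: Build_def Rm_rev_self)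

lemma B_aut: "B \<in> tree_aut"
proof (rule aut_intro[where s="\<lambda>v. L (Rm (rev u) v)"])
  show "bij_betw B tv tv" unfolding bij_betw_def
  proof
    show "inj_on B tv"
    proof
      fix v w :: "'a list" assume vw: "v \<in> tv" "w \<in> tv" "B v = B w"
      then have "Rm (rev u) (B v) = Rm (rev u) (B w)" by simp
      then have "G (Rm (rev u) v) = G (Rm (rev u) w)" using vw u_tv
        by (simp add: Build_def Rm_inv1 G_tv tv_rev)
      then show "v = w" using G_inj[OF Rm_tv[OF tv_rev[OF u_tv]] Rm_tv[OF tv_rev[OF u_tv]]] vw u_tv
        by (metis Rm_inv2)
    qed
    show "B ` tv = tv"
    proof
      show "B ` tv \<subseteq> tv" using B_tv by blast
      show "tv \<subseteq> B ` tv"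
      proof
        fix y :: "'a list" assume y: "y \<in> tv"
        have "Rm (rev u) y \<in> tv" by (rule Rm_tv[OF tv_rev[OF u_tv]])
        then obtain w where w: "w \<in> tv" "G w = Rm (rev u) y" using G_surj by blast
        have "Rm u w \<in> tv" using u_tv by simp
        moreover have "B (Rm u w) = y" using w y u_tv by (simp add: Build_def Rm_inv1 Rm_inv2)
        ultimately show "y \<in> B ` tv" by (metis image_eqI)
      qed
    qed
  qed
  show "\<And>v. v \<notin> tv \<Longrightarrow> B v = v" by (simp add: Build_def)
  show "\<And>v a. v \<in> tv \<Longrightarrow> B (nbr a v) = nbr (L (Rm (rev u) v) a) (B v)" by (rule B_nbr)
  show "\<And>v. v \<in> tv \<Longrightarrow> bij (L (Rm (rev u) v))" by (rule L_bij)
qed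

lemma B_lp: "v \<in> tv \<Longrightarrow> local_perm B v = L (Rm (rev u) v)"
  by (rule lp_char) (rule B_nbr)

end

definition adj :: "('a \<Rightarrow> 'a) \<Rightarrow> 'a \<Rightarrow> 'a \<Rightarrow> ('a \<Rightarrow> 'a)" where
  "adj p a b = sw (p a) b \<circ> p"

lemma adj_bij: "bij p \<Longrightarrow> bij (adj p a b)" by (simp add: adj_def bij_comp sw_bij)
lemma adj_val: "adj p a b a = b" by (simp add: adj_def sw_def)
lemma adj_same: "p a = b \<Longrightarrow> adj p a b = p" by (auto simp: adj_def sw_def)

locale P3 =
  fixes F F' :: "('a::finite \<Rightarrow> 'a) set" and n :: nat and v0 :: "'a list"
  assumes subF: "subgroup F (BijGroup (UNIV :: 'a set))"
  and subF': "subgroup F' (BijGroup (UNIV :: 'a set))"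
  and FF': "F \<subseteq> F'" and semi: "semiregular F" and orb: "preserves_orbits F' F"
  and n_def: "n = card (rcosets\<^bsub>(BijGroup (UNIV :: 'a set))\<lparr>carrier := F'\<rparr>\<^esub> F)"
  and v0: "v0 \<in> tv"
begin

lemma Fb: "f \<in> F \<Longrightarrow> bij f" using sg_bij subF by blast
lemma F'b: "f \<in> F' \<Longrightarrow> bij f" using sg_bij subF' by blast
lemma Fid: "id \<in> F" using sg_id subF by blast
lemma F'id: "id \<in> F'" using sg_id subF' by blast
lemma Fc: "f \<in> F \<Longrightarrow> g \<in> F \<Longrightarrow> f \<circ> g \<in> F" using sg_comp subF by blast
lemma F'c: "f \<in> F' \<Longrightarrow> g \<in> F' \<Longrightarrow> f \<circ> g \<in> F'" using sg_comp subF' by blast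
lemma Fi: "f \<in> F \<Longrightarrow> pinv f \<in> F" using sg_inv subF by blast
lemma F'i: "f \<in> F' \<Longrightarrow> pinv f \<in> F'" using sg_inv subF' by blast

definition Cs :: "('a \<Rightarrow> 'a) \<Rightarrow> ('a \<Rightarrow> 'a) set" where "Cs a = (\<lambda>h. h \<circ> a) ` F"
definition CS where "CS = Cs ` F'"

lemma rcosets_eq: "rcosets\<^bsub>(BijGroup (UNIV :: 'a set))\<lparr>carrier := F'\<rparr>\<^esub> F = CS"
proof -
  have "F #>\<^bsub>(BijGroup (UNIV :: 'a set))\<lparr>carrier := F'\<rparr>\<^esub> a = Cs a" if a: "a \<in> F'" for a
  proof -
    have e: "\<And>h. h \<in> F \<Longrightarrow> h \<otimes>\<^bsub>BijGroup (UNIV :: 'a set)\<^esub> a = h \<circ> a" using bg_mult Fb F'b[OF a] by blast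
    show ?thesis unfolding r_coset_def Cs_def using e by auto
  qed
  then show ?thesis unfolding RCOSETS_def CS_def by auto
qed

lemma n_card: "n = card CS" using n_def rcosets_eq by simp

lemma CS_fin: "finite CS" by simp

lemma Cs_mem: "a \<in> F' \<Longrightarrow> (f \<in> Cs a) = (f \<circ> pinv a \<in> F)"
proof
  assume a: "a \<in> F'"
  { assume "f \<in> Cs a" then obtain h where h: "h \<in> F" "f = h \<circ> a" by (auto simp: Cs_def)
    then have "f \<circ> pinv a = h \<circ> (a \<circ> pinv a)" by (simp add: o_assoc)
    then show "f \<circ> pinv a \<in> F" using pinv_comp2[OF F'b[OF a]] h by simp }
  { assume "f \<circ> pinv a \<in> F"
    moreover have "(f \<circ> pinv a) \<circ> a = f" using pinv_comp1[OF F'b[OF a]] by (simp add: o_assoc[symmetric])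
    ultimately show "f \<in> Cs a" unfolding Cs_def by (metis image_eqI) }
qed

lemma Cs_self: "a \<in> F' \<Longrightarrow> a \<in> Cs a"
  unfolding Cs_def by (rule image_eqI[where x=id]) (simp_all add: Fid)

lemma Cs_sub: "a \<in> F' \<Longrightarrow> Cs a \<subseteq> F'" using FF' F'c by (auto simp: Cs_def)

lemma Cs_id: "Cs id = F" by (simp add: Cs_def)

definition act :: "('a \<Rightarrow> 'a) \<Rightarrow> ('a \<Rightarrow> 'a) set \<Rightarrow> ('a \<Rightarrow> 'a) set" where
  "act f C = (\<lambda>h. h \<circ> pinv f) ` C"

lemma act_Cs: "act f (Cs a) = Cs (a \<circ> pinv f)"
  by (simp add: act_def Cs_def image_image o_assoc)

lemma act_CS: "f \<in> F' \<Longrightarrow> C \<in> CS \<Longrightarrow> act f C \<in> CS"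
  using act_Cs F'c F'i by (auto simp: CS_def)

lemma act_comp: "f \<in> F' \<Longrightarrow> g \<in> F' \<Longrightarrow> act (f \<circ> g) C = act f (act g C)"
  by (simp add: act_def image_image o_inv_distrib F'b o_assoc)

lemma act_id: "act id C = C" by (simp add: act_def)

definition Ez :: "nat \<Rightarrow> ('a \<Rightarrow> 'a) set" where "Ez = (SOME e. bij_betw e {..<n} CS)"

lemma E0_bij: "bij_betw Ez {..<n} CS"
proof -
  have "\<exists>e. bij_betw e {..<n} CS" using ex_bij_betw_nat_finite[OF CS_fin] n_card
    by (simp add: atLeast0LessThan)
  then show ?thesis unfolding Ez_def by (rule someI_ex)
qed

lemma F_CS: "F \<in> CS" using Cs_id F'id by (auto simp: CS_def)

lemma n_pos: "0 < n"
  using F_CS n_card CS_fin card_gt_0_iff by blast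

definition jz where "jz = the_inv_into {..<n} Ez F"

lemma jz: "jz < n" "Ez jz = F"
  using the_inv_into_into[OF bij_betw_imp_inj_on[OF E0_bij], of F "{..<n}"]
    f_the_inv_into_f[OF bij_betw_imp_inj_on[OF E0_bij], of F] F_CS E0_bij
  by (auto simp: jz_def bij_betw_def)

definition E where "E = Ez \<circ> sw 0 jz"

lemma E_bij: "bij_betw E {..<n} CS"
  unfolding E_def using bij_betw_trans[OF sw_bij_betw E0_bij] n_pos jz by auto

lemma E_0: "E 0 = F" using jz by (simp add: E_def sw_def)

definition Einv where "Einv Y = the_inv_into {..<n} E Y"

lemma E_CS: "i < n \<Longrightarrow> E i \<in> CS" by (rule bij_betw_apply[OF E_bij]) simp
lemma Einv_E: "i < n \<Longrightarrow> Einv (E i) = i"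
  unfolding Einv_def by (rule the_inv_into_f_f[OF bij_betw_imp_inj_on[OF E_bij]]) simp
lemma E_Ei: "Y \<in> CS \<Longrightarrow> E (Einv Y) = Y"
  unfolding Einv_def using E_bij by (simp add: bij_betw_def f_the_inv_into_f)
lemma Einv_lt: "Y \<in> CS \<Longrightarrow> Einv Y < n"
  unfolding Einv_def using E_bij the_inv_into_into[of E "{..<n}" Y "{..<n}"] by (auto simp: bij_betw_def)

definition rho :: "('a \<Rightarrow> 'a) \<Rightarrow> nat \<Rightarrow> nat" where
  "rho f = (\<lambda>i. if i < n then Einv (act f (E i)) else i)"

lemma rho_lt: "f \<in> F' \<Longrightarrow> i < n \<Longrightarrow> rho f i < n"
  by (simp add: rho_def Einv_lt act_CS E_CS)

lemma rho_comp: assumes "f \<in> F'" "g \<in> F'" shows "rho (f \<circ> g) = rho f \<circ> rho g"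
proof
  fix i show "rho (f \<circ> g) i = (rho f \<circ> rho g) i"
  proof (cases "i < n")
    case True
    then have "act g (E i) \<in> CS" using act_CS E_CS assms by blast
    then show ?thesis using True assms rho_lt
      by (simp add: rho_def act_comp E_Ei Einv_lt)
  qed (simp add: rho_def)
qed

lemma rho_id: "rho id = id"
  by (auto simp: rho_def act_id Einv_E)

lemma rho_inv1: assumes "f \<in> F'" shows "rho (pinv f) (rho f i) = i"
proof -
  have "rho (pinv f) (rho f i) = rho (pinv f \<circ> f) i" using rho_comp[OF F'i[OF assms] assms] by simp
  also have "\<dots> = i" using pinv_comp1[OF F'b[OF assms]] rho_id by simp
  finally show ?thesis .
qed

lemma rho_inv2: assumes "f \<in> F'" shows "rho f (rho (pinv f) i) = i"
proof -
  have "rho f (rho (pinv f) i) = rho (f \<circ> pinv f) i" using rho_comp[OF assms F'i[OF assms]] by simp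
  also have "\<dots> = i" using pinv_comp2[OF F'b[OF assms]] rho_id by simp
  finally show ?thesis .
qed

lemma rho_perm: assumes "f \<in> F'" shows "rho f permutes {..<n}"
proof (rule bij_imp_permutes)
  show "bij_betw (rho f) {..<n} {..<n}"
    by (rule bij_betw_byWitness[where f'="rho (pinv f)"])
       (use rho_inv1 rho_inv2 rho_lt assms F'i in auto)
  show "\<And>x. x \<notin> {..<n} \<Longrightarrow> rho f x = x" by (simp add: rho_def)
qed

lemma Einv_0: "Y \<in> CS \<Longrightarrow> (Einv Y = 0) = (Y = F)"
  using E_Ei Einv_E E_0 n_pos by metis

lemma rho_zero: assumes f: "f \<in> F'" and i: "i < n" shows "(rho f i = 0) = (f \<in> E i)"
proof -
  obtain a where a: "a \<in> F'" "E i = Cs a" using E_CS[OF i] by (auto simp: CS_def)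
  have "rho f i = Einv (Cs (a \<circ> pinv f))" using i a by (simp add: rho_def act_Cs)
  moreover have "Cs (a \<circ> pinv f) \<in> CS" using a f F'c F'i by (auto simp: CS_def)
  ultimately have "(rho f i = 0) = (Cs (a \<circ> pinv f) = F)" using Einv_0 by simp
  also have "\<dots> = (a \<circ> pinv f \<in> F)"
  proof
    assume "Cs (a \<circ> pinv f) = F" then show "a \<circ> pinv f \<in> F" using Cs_self a f F'c F'i by blast
  next
    assume h: "a \<circ> pinv f \<in> F"
    show "Cs (a \<circ> pinv f) = F"
    proof (rule equalityI)
      show "Cs (a \<circ> pinv f) \<subseteq> F" using h Fc by (auto simp: Cs_def)
    next
      show "F \<subseteq> Cs (a \<circ> pinv f)"
      proof
      fix x assume x: "x \<in> F"
      have "x = (x \<circ> pinv (a \<circ> pinv f)) \<circ> (a \<circ> pinv f)"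
        using pinv_comp1[OF Fb[OF h]] by (simp add: o_assoc[symmetric])
      moreover have "x \<circ> pinv (a \<circ> pinv f) \<in> F" using x h Fc Fi by blast
      ultimately show "x \<in> Cs (a \<circ> pinv f)" unfolding Cs_def by (metis image_eqI)
      qed
    qed
  qed
  also have "\<dots> = (f \<circ> pinv a \<in> F)"
  proof -
    have "pinv (a \<circ> pinv f) = f \<circ> pinv a"
      using F'b a f by (simp add: o_inv_distrib pinv_bij inv_inv_eq)
    moreover have bq: "bij (a \<circ> pinv f)" using F'b a f by (simp add: bij_comp pinv_bij)
    ultimately have "pinv (f \<circ> pinv a) = a \<circ> pinv f" using inv_inv_eq[OF bq] by simp
    then show ?thesis using \<open>pinv (a \<circ> pinv f) = f \<circ> pinv a\<close> Fi by metis
  qed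
  also have "\<dots> = (f \<in> E i)" using Cs_mem a by simp
  finally show ?thesis .
qed

lemma rho_zero0: "f \<in> F' \<Longrightarrow> (rho f 0 = 0) = (f \<in> F)"
  using rho_zero[of f 0] n_pos E_0 by simp

lemma rho_same0: assumes "a \<in> F'" "b \<in> F'" "rho a 0 = rho b 0" shows "\<exists>h\<in>F. b = a \<circ> h"
proof -
  have c: "pinv a \<circ> b \<in> F'" using assms F'c F'i by blast
  have "rho (pinv a \<circ> b) 0 = rho (pinv a) (rho b 0)" using rho_comp assms F'i by simp
  also have "\<dots> = 0" using assms(3)[symmetric] rho_inv1[OF assms(1), of 0] by simp
  finally have "pinv a \<circ> b \<in> F" using rho_zero0 c by blast
  moreover have "b = a \<circ> (pinv a \<circ> b)" using pinv_comp2[OF F'b[OF assms(1)]] by (simp add: o_assoc)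
  ultimately show ?thesis by blast
qed

lemma E_sub: "i < n \<Longrightarrow> E i \<subseteq> F'"
  using E_CS Cs_sub by (auto simp: CS_def)

lemma E_orbit: assumes i: "i < n" and p: "p \<in> F'" shows "\<exists>f\<in>E i. f x = p x"
proof -
  obtain c where c: "c \<in> F'" "E i = Cs c" using E_CS[OF i] by (auto simp: CS_def)
  have "c x \<in> {f x | f. f \<in> F}" using orb c unfolding preserves_orbits_def by blast
  then obtain h1 where h1: "h1 \<in> F" "c x = h1 x" by blast
  have "p x \<in> {f x | f. f \<in> F}" using orb p unfolding preserves_orbits_def by blast
  then obtain h2 where h2: "h2 \<in> F" "p x = h2 x" by blast
  define f where "f = h2 \<circ> pinv h1 \<circ> c"
  have "f \<circ> pinv c = h2 \<circ> pinv h1" using pinv_comp2[OF F'b[OF c(1)]] by (simp add: f_def o_assoc[symmetric])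
  then have "f \<in> Cs c" using Cs_mem c h1 h2 Fc Fi by simp
  moreover have "f x = p x" using h1 h2 Fb[OF h1(1)] by (simp add: f_def bij_is_inj)
  ultimately show ?thesis using c by blast
qed


section \<open>The group K and the map phi\<close>

abbreviation "K \<equiv> carrier (KFF_group F F' v0)"
abbreviation "HG \<equiv> H_group n v0"

lemma K_iff: "g \<in> K \<longleftrightarrow> g \<in> tree_aut \<and> (\<forall>v\<in>tv. local_perm g v \<in> F') \<and> finite {v \<in> tv. local_perm g v \<notin> F} \<and> g v0 = v0"
  by (auto simp: KFF_group_def GFF_def)

lemma K_id: "id \<in> K"
  unfolding K_iff using id_aut F'id Fid by (simp add: lp_id)

lemma K_comp: assumes g: "g \<in> K" and h: "h \<in> K" shows "g \<circ> h \<in> K"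
proof -
  have ga: "g \<in> tree_aut" and ha: "h \<in> tree_aut" using g h K_iff by auto
  have "\<forall>v\<in>tv. local_perm (g \<circ> h) v \<in> F'"
    using g h ga ha by (auto simp: K_iff lp_comp aut_tv F'c)
  moreover have "finite {v \<in> tv. local_perm (g \<circ> h) v \<notin> F}"
  proof (rule finite_subset)
    show "{v \<in> tv. local_perm (g \<circ> h) v \<notin> F} \<subseteq> {v \<in> tv. local_perm h v \<notin> F} \<union> ginv h ` {w \<in> tv. local_perm g w \<notin> F}"
    proof
      fix v :: "'a list" assume v: "v \<in> {v \<in> tv. local_perm (g \<circ> h) v \<notin> F}"
      have "local_perm (g \<circ> h) v = local_perm g (h v) \<circ> local_perm h v" using lp_comp[OF ga ha] v by blast
      then have "local_perm g (h v) \<circ> local_perm h v \<notin> F" using v by simp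
      then have "local_perm h v \<notin> F \<or> local_perm g (h v) \<notin> F" using Fc by blast
      moreover have "v = ginv h (h v)" "h v \<in> tv" using v ha aut_tv by auto
      ultimately show "v \<in> {v \<in> tv. local_perm h v \<notin> F} \<union> ginv h ` {w \<in> tv. local_perm g w \<notin> F}"
        using v by blast
    qed
    show "finite ({v \<in> tv. local_perm h v \<notin> F} \<union> ginv h ` {w \<in> tv. local_perm g w \<notin> F})"
      using g h K_iff by auto
  qed
  ultimately show ?thesis using g h K_iff aut_comp by auto
qed

lemma K_inv: assumes g: "g \<in> K" shows "ginv g \<in> K"
proof -
  have ga: "g \<in> tree_aut" using g K_iff by auto
  have lp: "local_perm (ginv g) v = pinv (local_perm g (ginv g v))" if "v \<in> tv" for v
    using lp_ginv[OF ga ginv_tv[OF ga that]] that ga by simp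
  have "\<forall>v\<in>tv. local_perm (ginv g) v \<in> F'"
  proof
    fix v :: "'a list" assume v: "v \<in> tv"
    have "local_perm g (ginv g v) \<in> F'" using g K_iff ginv_tv[OF ga v] by auto
    then show "local_perm (ginv g) v \<in> F'" by (simp add: lp[OF v] F'i)
  qed
  moreover have "finite {v \<in> tv. local_perm (ginv g) v \<notin> F}"
  proof (rule finite_subset)
    show "{v \<in> tv. local_perm (ginv g) v \<notin> F} \<subseteq> g ` {w \<in> tv. local_perm g w \<notin> F}"
    proof
      fix v :: "'a list" assume v: "v \<in> {v \<in> tv. local_perm (ginv g) v \<notin> F}"
      then have "local_perm g (ginv g v) \<notin> F" using lp Fi by auto
      moreover have "v = g (ginv g v)" "ginv g v \<in> tv" using v ga ginv_tv by auto
      ultimately show "v \<in> g ` {w \<in> tv. local_perm g w \<notin> F}" by blast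
    qed
    show "finite (g ` {w \<in> tv. local_perm g w \<notin> F})" using g K_iff by auto
  qed
  moreover have "ginv g v0 = v0" using g K_iff v0 ginv_left[OF ga v0] by auto
  ultimately show ?thesis using aut_ginv[OF ga] by (simp add: K_iff)
qed

definition phi :: "('a list \<Rightarrow> 'a list) \<Rightarrow> ('a list \<Rightarrow> nat \<Rightarrow> nat) \<times> ('a list \<Rightarrow> 'a list)" where
  "phi g = ((\<lambda>v. if v \<in> tv then rho (local_perm g (ginv g v)) else id), g)"

lemma sh_tv: "v \<in> tv \<Longrightarrow> shift_act g \<tau> v = \<tau> (ginv g v)"
  by (simp add: shift_act_def ginv_def)
lemma sh_out: "v \<notin> tv \<Longrightarrow> shift_act g \<tau> v = id"
  by (simp add: shift_act_def)

lemma Hm: "(\<sigma>, g) \<otimes>\<^bsub>HG\<^esub> (\<tau>, h) = ((\<lambda>v. \<sigma> v \<circ> shift_act g \<tau> v), g \<circ> h)"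
  by (simp add: H_group_def)
lemma H1: "\<one>\<^bsub>HG\<^esub> = ((\<lambda>v. id), id)" by (simp add: H_group_def)
lemma Hc: "carrier HG = H_carrier n v0" by (simp add: H_group_def)

lemma Hcar: "(\<sigma>, g) \<in> H_carrier n v0 \<longleftrightarrow> (\<forall>v\<in>tv. \<sigma> v permutes {..<n}) \<and> (\<forall>v. v \<notin> tv \<longrightarrow> \<sigma> v = id)
      \<and> finite {v \<in> tv. \<sigma> v 0 \<noteq> 0} \<and> g \<in> tree_aut \<and> g v0 = v0"
  by (simp add: H_carrier_def)

lemma H_closed: assumes x: "(\<sigma>, g) \<in> H_carrier n v0" and y: "(\<tau>, h) \<in> H_carrier n v0"
  shows "((\<lambda>v. \<sigma> v \<circ> shift_act g \<tau> v), g \<circ> h) \<in> H_carrier n v0"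
proof -
  have ga: "g \<in> tree_aut" and ha: "h \<in> tree_aut" using x y Hcar by auto
  have p: "\<forall>v\<in>tv. \<sigma> v \<circ> shift_act g \<tau> v permutes {..<n}"
  proof
    fix v :: "'a list" assume v: "v \<in> tv"
    have "\<tau> (ginv g v) permutes {..<n}" using y ginv_tv[OF ga v] Hcar by auto
    moreover have "\<sigma> v permutes {..<n}" using x v Hcar by auto
    ultimately show "\<sigma> v \<circ> shift_act g \<tau> v permutes {..<n}" using v sh_tv permutes_compose by metis
  qed
  have o: "\<forall>v. v \<notin> tv \<longrightarrow> \<sigma> v \<circ> shift_act g \<tau> v = id" using x sh_out Hcar by auto
  have f: "finite {v \<in> tv. (\<sigma> v \<circ> shift_act g \<tau> v) 0 \<noteq> 0}"
  proof (rule finite_subset)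
    show "{v \<in> tv. (\<sigma> v \<circ> shift_act g \<tau> v) 0 \<noteq> 0} \<subseteq> {v \<in> tv. \<sigma> v 0 \<noteq> 0} \<union> g ` {w \<in> tv. \<tau> w 0 \<noteq> 0}"
    proof
      fix v :: "'a list" assume v: "v \<in> {v \<in> tv. (\<sigma> v \<circ> shift_act g \<tau> v) 0 \<noteq> 0}"
      moreover have "shift_act g \<tau> v = \<tau> (ginv g v)" using v by (simp add: sh_tv)
      ultimately have "\<sigma> v (\<tau> (ginv g v) 0) \<noteq> 0" by simp
      then have "\<sigma> v 0 \<noteq> 0 \<or> \<tau> (ginv g v) 0 \<noteq> 0" by auto
      moreover have "v = g (ginv g v)" "ginv g v \<in> tv" using v ga ginv_tv by auto
      ultimately show "v \<in> {v \<in> tv. \<sigma> v 0 \<noteq> 0} \<union> g ` {w \<in> tv. \<tau> w 0 \<noteq> 0}" using v by blast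
    qed
    show "finite ({v \<in> tv. \<sigma> v 0 \<noteq> 0} \<union> g ` {w \<in> tv. \<tau> w 0 \<noteq> 0})" using x y Hcar by auto
  qed
  show ?thesis using p o f aut_comp[OF ga ha] x y Hcar by auto
qed

lemma H_monoid: "monoid HG"
proof (rule monoidI)
  fix x y assume x: "x \<in> carrier HG" and y: "y \<in> carrier HG"
  obtain \<sigma> g where xe: "x = (\<sigma>, g)" by (cases x)
  obtain \<tau> h where ye: "y = (\<tau>, h)" by (cases y)
  show "x \<otimes>\<^bsub>HG\<^esub> y \<in> carrier HG" using H_closed x y xe ye Hc Hm by simp
next
  show "\<one>\<^bsub>HG\<^esub> \<in> carrier HG" by (simp add: H1 Hc Hcar id_aut)
next
  fix x y z assume x: "x \<in> carrier HG" and y: "y \<in> carrier HG" and z: "z \<in> carrier HG"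
  obtain \<sigma> g where xe: "x = (\<sigma>, g)" by (cases x)
  obtain \<tau> h where ye: "y = (\<tau>, h)" by (cases y)
  obtain \<mu> k where ze: "z = (\<mu>, k)" by (cases z)
  have ga: "g \<in> tree_aut" and ha: "h \<in> tree_aut" using x y xe ye Hc Hcar by auto
  have "(\<lambda>v. (\<sigma> v \<circ> shift_act g \<tau> v) \<circ> shift_act (g \<circ> h) \<mu> v) = (\<lambda>v. \<sigma> v \<circ> shift_act g (\<lambda>v. \<tau> v \<circ> shift_act h \<mu> v) v)"
  proof
    fix v show "(\<sigma> v \<circ> shift_act g \<tau> v) \<circ> shift_act (g \<circ> h) \<mu> v = \<sigma> v \<circ> shift_act g (\<lambda>v. \<tau> v \<circ> shift_act h \<mu> v) v"
    proof (cases "v \<in> tv")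
      case True
      have gc: "ginv (g \<circ> h) v = ginv h (ginv g v)" by (rule ginv_comp[OF ga ha True])
      show ?thesis by (rule ext) (simp add: sh_tv ginv_tv[OF ga True] gc True)
    qed (simp add: sh_out)
  qed
  then show "x \<otimes>\<^bsub>HG\<^esub> y \<otimes>\<^bsub>HG\<^esub> z = x \<otimes>\<^bsub>HG\<^esub> (y \<otimes>\<^bsub>HG\<^esub> z)" using xe ye ze by (simp add: Hm o_assoc)
next
  fix x assume x: "x \<in> carrier HG"
  obtain \<sigma> g where xe: "x = (\<sigma>, g)" by (cases x)
  have "(\<lambda>v. id \<circ> shift_act id \<sigma> v) = \<sigma>"
  proof
    fix v show "id \<circ> shift_act id \<sigma> v = \<sigma> v"
    proof (cases "v \<in> tv")
      case True then show ?thesis using ginv_left[OF id_aut True] by (simp add: sh_tv)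
    next
      case False then show ?thesis using x xe Hc Hcar by (simp add: sh_out)
    qed
  qed
  then show "\<one>\<^bsub>HG\<^esub> \<otimes>\<^bsub>HG\<^esub> x = x" using xe by (simp add: H1 Hm)
  have "(\<lambda>v. \<sigma> v \<circ> shift_act g (\<lambda>v. id) v) = \<sigma>"
  proof
    fix v show "\<sigma> v \<circ> shift_act g (\<lambda>v. id) v = \<sigma> v"
      by (cases "v \<in> tv") (simp_all add: sh_tv sh_out comp_def)
  qed
  then show "x \<otimes>\<^bsub>HG\<^esub> \<one>\<^bsub>HG\<^esub> = x" using xe by (simp add: H1 Hm)
qed

lemma phi_car: assumes g: "g \<in> K" shows "phi g \<in> H_carrier n v0"
proof -
  have ga: "g \<in> tree_aut" using g K_iff by auto
  have lpF: "\<And>v. v \<in> tv \<Longrightarrow> local_perm g (ginv g v) \<in> F'" using g K_iff ga ginv_tv by auto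
  have "finite {v \<in> tv. (if v \<in> tv then rho (local_perm g (ginv g v)) else id) 0 \<noteq> 0}"
  proof (rule finite_subset)
    show "{v \<in> tv. (if v \<in> tv then rho (local_perm g (ginv g v)) else id) 0 \<noteq> 0} \<subseteq> g ` {w \<in> tv. local_perm g w \<notin> F}"
    proof
      fix v :: "'a list" assume v: "v \<in> {v \<in> tv. (if v \<in> tv then rho (local_perm g (ginv g v)) else id) 0 \<noteq> 0}"
      have vt: "v \<in> tv" using v by simp
      have r: "rho (local_perm g (ginv g v)) 0 \<noteq> 0" using v vt by simp
      have "local_perm g (ginv g v) \<notin> F"
      proof
        assume "local_perm g (ginv g v) \<in> F"
        then have "rho (local_perm g (ginv g v)) 0 = 0" using rho_zero0[OF lpF[OF vt]] by simp
        then show False using r by simp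
      qed
      moreover have "v = g (ginv g v)" "ginv g v \<in> tv" using v ga ginv_tv by auto
      ultimately show "v \<in> g ` {w \<in> tv. local_perm g w \<notin> F}" by blast
    qed
    show "finite (g ` {w \<in> tv. local_perm g w \<notin> F})" using g K_iff by auto
  qed
  then show ?thesis using lpF rho_perm g K_iff by (simp add: phi_def Hcar)
qed

lemma phi_mult: assumes g: "g \<in> K" and h: "h \<in> K" shows "phi (g \<circ> h) = phi g \<otimes>\<^bsub>HG\<^esub> phi h"
proof -
  have ga: "g \<in> tree_aut" and ha: "h \<in> tree_aut" using g h K_iff by auto
  have "(\<lambda>v. if v \<in> tv then rho (local_perm (g \<circ> h) (ginv (g \<circ> h) v)) else id)
      = (\<lambda>v. (if v \<in> tv then rho (local_perm g (ginv g v)) else id) \<circ>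
             shift_act g (\<lambda>v. if v \<in> tv then rho (local_perm h (ginv h v)) else id) v)"
  proof
    fix v show "(if v \<in> tv then rho (local_perm (g \<circ> h) (ginv (g \<circ> h) v)) else id)
      = (if v \<in> tv then rho (local_perm g (ginv g v)) else id) \<circ>
             shift_act g (\<lambda>v. if v \<in> tv then rho (local_perm h (ginv h v)) else id) v"
    proof (cases "v \<in> tv")
      case True
      define w where "w = ginv h (ginv g v)"
      have w: "w \<in> tv" "h w = ginv g v" unfolding w_def
        using ginv_tv[OF ga True] ginv_tv[OF ha ginv_tv[OF ga True]] ha by simp_all
      have "local_perm (g \<circ> h) w = local_perm g (ginv g v) \<circ> local_perm h w"
        using lp_comp[OF ga ha w(1)] w by simp
      moreover have "local_perm g (ginv g v) \<in> F'" "local_perm h w \<in> F'"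
        using g h K_iff w ginv_tv[OF ga True] by auto
      ultimately have "rho (local_perm (g \<circ> h) w) = rho (local_perm g (ginv g v)) \<circ> rho (local_perm h w)"
        using rho_comp by simp
      then show ?thesis using True ga ha ginv_tv[OF ga True] w by (simp add: sh_tv ginv_comp w_def)
    qed (simp add: sh_out)
  qed
  then show ?thesis by (simp add: phi_def Hm)
qed

lemma phi_id: "phi id = \<one>\<^bsub>HG\<^esub>"
proof -
  have "(\<lambda>v. if v \<in> tv then rho (local_perm id (ginv id v)) else id) = (\<lambda>v. id)"
    by (auto simp: lp_id rho_id)
  then show ?thesis by (simp add: phi_def H1)
qed

lemma phi_hom: "phi \<in> hom (KFF_group F F' v0) HG"
  unfolding hom_def using phi_car phi_mult K_comp by (auto simp: Hc KFF_group_def)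

lemma phi_inj: "inj_on phi K" by (rule inj_onI) (simp add: phi_def)

lemma phi_inv: assumes g: "g \<in> K" shows "m_inv HG (phi g) = phi (ginv g)"
proof -
  have ga: "g \<in> tree_aut" using g K_iff by auto
  have "phi g \<otimes>\<^bsub>HG\<^esub> phi (ginv g) = \<one>\<^bsub>HG\<^esub>" using phi_mult[OF g K_inv[OF g]] ginv_comp2[OF ga] phi_id by simp
  moreover have "phi (ginv g) \<otimes>\<^bsub>HG\<^esub> phi g = \<one>\<^bsub>HG\<^esub>" using phi_mult[OF K_inv[OF g] g] ginv_comp1[OF ga] phi_id by simp
  ultimately show ?thesis using monoid.inv_unique'[OF H_monoid] phi_car g K_inv Hc by metis
qed

lemma Gamma_subgroup: "subgroup (phi ` K) HG"
proof
  show "phi ` K \<subseteq> carrier HG" using phi_car Hc by auto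
  fix x y assume "x \<in> phi ` K" "y \<in> phi ` K"
  then obtain g h where "g \<in> K" "h \<in> K" "x = phi g" "y = phi h" by blast
  then show "x \<otimes>\<^bsub>HG\<^esub> y \<in> phi ` K" using phi_mult K_comp by (metis image_eqI)
next
  show "\<one>\<^bsub>HG\<^esub> \<in> phi ` K" using phi_id K_id by (metis image_eqI)
next
  fix x assume "x \<in> phi ` K"
  then obtain g where "g \<in> K" "x = phi g" by blast
  then show "m_inv HG x \<in> phi ` K" using phi_inv K_inv by (metis image_eqI)
qed


section \<open>Discreteness\<close>

lemma uniq:
  assumes x: "x \<in> tree_aut" and y: "y \<in> tree_aut" and e0: "x v0 = y v0"
    and l0: "local_perm x v0 = local_perm y v0"
    and cond: "\<And>w. w \<in> tv \<Longrightarrow> x w = y w \<Longrightarrow> \<exists>f\<in>F. local_perm y w = local_perm x w \<circ> f"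
  shows "x = y"
proof -
  have P: "x w = y w \<and> local_perm x w = local_perm y w" if w: "w \<in> tv" for w
    using v0
  proof (rule reach[where P="\<lambda>w. x w = y w \<and> local_perm x w = local_perm y w"])
    show "x v0 = y v0 \<and> local_perm x v0 = local_perm y v0" using e0 l0 by simp
    show "w \<in> tv" by (rule w)
    fix v a assume v: "v \<in> tv" and Pv: "x v = y v \<and> local_perm x v = local_perm y v"
    define w' where "w' = nbr a v"
    have w': "w' \<in> tv" using v by (simp add: w'_def)
    have xe: "x w' = y w'" using lp_eq[OF x v] lp_eq[OF y v] Pv by (simp add: w'_def)
    obtain f where f: "f \<in> F" "local_perm y w' = local_perm x w' \<circ> f" using cond[OF w' xe] by blast
    have "local_perm x w' a = local_perm x v a" using lp_back[OF x v] by (simp add: w'_def)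
    moreover have "local_perm y w' a = local_perm y v a" using lp_back[OF y v] by (simp add: w'_def)
    ultimately have "local_perm x w' (f a) = local_perm x w' a" using f Pv by simp
    then have "f a = a" using lp_inj[OF x w'] by (simp add: inj_eq)
    then have "f = id" using semi f unfolding semiregular_def by blast
    then show "x (nbr a v) = y (nbr a v) \<and> local_perm x (nbr a v) = local_perm y (nbr a v)"
      using xe f by (simp add: w'_def)
  qed
  show ?thesis by (rule aut_eq[OF x y]) (use P in blast)
qed

definition Snb where "Snb = insert v0 (range (\<lambda>a. nbr a v0))"

lemma Snb: "finite Snb" "Snb \<subseteq> tv" "v0 \<in> Snb" "\<And>a. nbr a v0 \<in> Snb"
  using v0 by (auto simp: Snb_def)

lemma phi_fst: "phi g = (fst (phi g), g)" by (simp add: phi_def)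

lemma basic_open: assumes "(\<sigma>, g) \<in> H_carrier n v0" "finite S" "S \<subseteq> tv"
  shows "openin (H_topology n v0) (H_basic_open n v0 \<sigma> g S)"
  unfolding H_topology_def by (rule topology_generated_by_Basis) (use assms in blast)

lemma discrete: assumes "x \<in> phi ` K" shows "\<exists>U. openin (H_topology n v0) U \<and> U \<inter> phi ` K = {x}"
proof -
  obtain g where g: "g \<in> K" "x = phi g" using assms by blast
  have ga: "g \<in> tree_aut" using g K_iff by auto
  define U where "U = H_basic_open n v0 (fst (phi g)) g Snb"
  have "openin (H_topology n v0) U" unfolding U_def
    by (rule basic_open) (use phi_car[OF g(1)] phi_fst[of g] Snb in auto)
  moreover have "U \<inter> phi ` K = {x}"
  proof
    show "{x} \<subseteq> U \<inter> phi ` K"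
      using g phi_car[OF g(1)] phi_fst[of g] by (auto simp: U_def H_basic_open_def)
    show "U \<inter> phi ` K \<subseteq> {x}"
    proof
      fix y assume y: "y \<in> U \<inter> phi ` K"
      then obtain h where h: "h \<in> K" "y = phi h" by blast
      have ha: "h \<in> tree_aut" using h K_iff by auto
      have hU: "(fst (phi h), h) \<in> U" using y h phi_fst[of h] by simp
      then have c1: "\<forall>v\<in>tv. fst (phi h) v 0 = fst (phi g) v 0" and c2: "\<forall>v\<in>Snb. h v = g v"
        by (auto simp: U_def H_basic_open_def)
      have e0: "g v0 = h v0" using c2 Snb by simp
      have l0: "local_perm g v0 = local_perm h v0"
      proof -
        have "\<And>a. h (nbr a v0) = g (nbr a v0)" using c2 Snb by simp
        then show ?thesis unfolding local_perm_def using e0 by simp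
      qed
      have "g = h"
      proof (rule uniq[OF ga ha e0 l0])
        fix w assume w: "w \<in> tv" and gw: "g w = h w"
        have u: "g w \<in> tv" using aut_tv[OF ga w] .
        have "fst (phi h) (g w) 0 = fst (phi g) (g w) 0" using c1 u by blast
        moreover have "ginv h (g w) = w" using gw ginv_left[OF ha w] by simp
        moreover have "ginv g (g w) = w" using ginv_left[OF ga w] .
        ultimately have "rho (local_perm h w) 0 = rho (local_perm g w) 0" using u by (simp add: phi_def)
        moreover have "local_perm g w \<in> F'" "local_perm h w \<in> F'" using g h w K_iff by auto
        ultimately show "\<exists>f\<in>F. local_perm h w = local_perm g w \<circ> f" using rho_same0 by metis
      qed
      then show "y \<in> {x}" using g h by simp
    qed
  qed
  ultimately show ?thesis by blast
qed

section \<open>Decomposition H = C Gamma\<close>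

definition Cset where "Cset = {(\<tau>, k) \<in> H_carrier n v0. \<forall>v\<in>tv. \<tau> v 0 = 0}"

lemma decomp: assumes tk: "(\<tau>, k) \<in> H_carrier n v0"
  shows "\<exists>c \<gamma>. c \<in> Cset \<and> \<gamma> \<in> K \<and> (\<tau>, k) = c \<otimes>\<^bsub>HG\<^esub> phi \<gamma>"
proof -
  have ka: "k \<in> tree_aut" and kv0: "k v0 = v0" using tk Hcar by auto
  have tperm: "\<And>w. w \<in> tv \<Longrightarrow> \<tau> (k w) permutes {..<n}" using tk Hcar aut_tv[OF ka] by auto
  define jt where "jt = (\<lambda>w. if w \<in> tv then inv_into {..<n} (\<tau> (k w)) 0 else 0)"
  have jt_lt: "jt w < n" for w
  proof (cases "w \<in> tv")
    case True
    have "bij_betw (\<tau> (k w)) {..<n} {..<n}" using permutes_imp_bij[OF tperm[OF True]] .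
    then have "0 \<in> \<tau> (k w) ` {..<n}" using n_pos by (simp add: bij_betw_def)
    then show ?thesis using True by (simp add: jt_def inv_into_into[of 0 "\<tau> (k w)" "{..<n}", simplified])
  qed (simp add: jt_def n_pos)
  have jt_val: "\<tau> (k w) (jt w) = 0" if "w \<in> tv" for w
  proof -
    have "bij_betw (\<tau> (k w)) {..<n} {..<n}" using permutes_imp_bij[OF tperm[OF that]] .
    then have "0 \<in> \<tau> (k w) ` {..<n}" using n_pos by (simp add: bij_betw_def)
    then show ?thesis using that by (simp add: jt_def f_inv_into_f)
  qed
  have jt_0: "jt w = 0" if "w \<in> tv" "\<tau> (k w) 0 = 0" for w
  proof -
    have "inj_on (\<tau> (k w)) {..<n}" using permutes_imp_bij[OF tperm[OF that(1)]] by (simp add: bij_betw_def)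
    then show ?thesis using that n_pos by (simp add: jt_def inv_into_f_eq)
  qed
  define r where "r = (SOME f. f \<in> E (jt v0))"
  define ch where "ch = (\<lambda>w a b. if (\<exists>f\<in>E (jt w). f a = b) then (SOME f. f \<in> E (jt w) \<and> f a = b) else adj id a b)"
  have r_in: "r \<in> E (jt v0)"
  proof -
    obtain f where "f \<in> E (jt v0)" using E_orbit[OF jt_lt F'id] by blast
    then show ?thesis unfolding r_def by (rule someI[where P="\<lambda>f. f \<in> E (jt v0)"])
  qed
  have ch_in: "ch w a b \<in> E (jt w) \<and> ch w a b a = b" if "\<exists>f\<in>E (jt w). f a = b" for w a b
  proof -
    have "\<exists>f. f \<in> E (jt w) \<and> f a = b" using that by blast
    then have "(SOME f. f \<in> E (jt w) \<and> f a = b) \<in> E (jt w) \<and> (SOME f. f \<in> E (jt w) \<and> f a = b) a = b"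
      by (rule someI_ex)
    then show ?thesis using that by (simp add: ch_def)
  qed
  have Eb: "\<And>f i. i < n \<Longrightarrow> f \<in> E i \<Longrightarrow> bij f" using E_sub F'b by blast
  interpret BB: build r ch v0
  proof
    show "bij r" using Eb[OF jt_lt r_in] .
    fix w a b
    show "bij (ch w a b)"
    proof (cases "\<exists>f\<in>E (jt w). f a = b")
      case True then show ?thesis using ch_in Eb jt_lt by blast
    next
      case False then show ?thesis by (simp add: ch_def adj_bij)
    qed
    show "ch w a b a = b"
    proof (cases "\<exists>f\<in>E (jt w). f a = b")
      case True then show ?thesis using ch_in by blast
    next
      case False then show ?thesis by (simp add: ch_def adj_val)
    qed
  next
    show "v0 \<in> tv" by (rule v0)
  qed
  have Lin: "Lr r ch v0 w' \<in> E (jt (Rm v0 w'))" if "w' \<in> tv" for w'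
    using that
  proof (induction w')
    case Nil then show ?case using r_in by simp
  next
    case (Cons a w')
    then have w': "w' \<in> tv" by (simp add: tv_Cons)
    then have IH: "Lr r ch v0 w' \<in> E (jt (Rm v0 w'))" using Cons.IH by blast
    then have "Lr r ch v0 w' \<in> F'" using E_sub jt_lt by blast
    then have "\<exists>f\<in>E (jt (Rm v0 (a # w'))). f a = Lr r ch v0 w' a" using E_orbit jt_lt by blast
    then show ?case using ch_in by simp
  qed
  define \<gamma> where "\<gamma> = Build r ch v0"
  have ga: "\<gamma> \<in> tree_aut" unfolding \<gamma>_def by (rule BB.B_aut)
  have lpg: "local_perm \<gamma> v \<in> E (jt v)" if "v \<in> tv" for v
    using BB.B_lp[OF that] Lin[OF Rm_tv[OF tv_rev[OF v0], of v]] Rm_inv2[OF v0 that] by (simp add: \<gamma>_def)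
  have gK: "\<gamma> \<in> K"
  proof -
    have "\<forall>v\<in>tv. local_perm \<gamma> v \<in> F'" using lpg E_sub jt_lt by blast
    moreover have "finite {v \<in> tv. local_perm \<gamma> v \<notin> F}"
    proof (rule finite_subset)
      show "{v \<in> tv. local_perm \<gamma> v \<notin> F} \<subseteq> ginv k ` {u \<in> tv. \<tau> u 0 \<noteq> 0}"
      proof
        fix v :: "'a list" assume v: "v \<in> {v \<in> tv. local_perm \<gamma> v \<notin> F}"
        then have vt: "v \<in> tv" by simp
        have "\<tau> (k v) 0 \<noteq> 0"
        proof
          assume "\<tau> (k v) 0 = 0"
          then have "jt v = 0" using jt_0 vt by blast
          then show False using lpg[OF vt] v E_0 by simp
        qed
        moreover have "v = ginv k (k v)" "k v \<in> tv" using vt ka aut_tv by auto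
        ultimately show "v \<in> ginv k ` {u \<in> tv. \<tau> u 0 \<noteq> 0}" by blast
      qed
      show "finite (ginv k ` {u \<in> tv. \<tau> u 0 \<noteq> 0})" using tk Hcar by auto
    qed
    moreover have "\<gamma> v0 = v0" unfolding \<gamma>_def by (rule BB.B_u)
    ultimately show ?thesis using ga by (simp add: K_iff)
  qed
  have giK: "ginv \<gamma> \<in> K" using K_inv[OF gK] .
  define c where "c = (\<tau>, k) \<otimes>\<^bsub>HG\<^esub> phi (ginv \<gamma>)"
  have cc: "c \<in> carrier HG" unfolding c_def
    using monoid.m_closed[OF H_monoid] tk phi_car[OF giK] Hc by simp
  have ce: "c = ((\<lambda>v. \<tau> v \<circ> shift_act k (fst (phi (ginv \<gamma>))) v), k \<circ> ginv \<gamma>)"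
    unfolding c_def by (subst phi_fst) (simp add: Hm)
  have "\<forall>v\<in>tv. (\<tau> v \<circ> shift_act k (fst (phi (ginv \<gamma>))) v) 0 = 0"
  proof
    fix v :: "'a list" assume vt: "v \<in> tv"
    define w where "w = ginv k v"
    have w: "w \<in> tv" "k w = v" using vt ka by (auto simp: w_def ginv_tv)
    have "shift_act k (fst (phi (ginv \<gamma>))) v = rho (local_perm (ginv \<gamma>) (ginv (ginv \<gamma>) w))"
      using vt w by (simp add: sh_tv phi_def w_def)
    also have "\<dots> = rho (pinv (local_perm \<gamma> w))"
      using ginv_ginv[OF ga w(1)] lp_ginv[OF ga w(1)] by simp
    finally have sh: "shift_act k (fst (phi (ginv \<gamma>))) v = rho (pinv (local_perm \<gamma> w))" .
    have f: "local_perm \<gamma> w \<in> E (jt w)" using lpg[OF w(1)] .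
    then have fF: "local_perm \<gamma> w \<in> F'" using E_sub jt_lt by blast
    have "rho (local_perm \<gamma> w) (jt w) = 0" using rho_zero[OF fF jt_lt] f by simp
    then have "rho (pinv (local_perm \<gamma> w)) 0 = jt w" using rho_inv1[OF fF, of "jt w"] by simp
    then show "(\<tau> v \<circ> shift_act k (fst (phi (ginv \<gamma>))) v) 0 = 0" using sh jt_val[OF w(1)] w by simp
  qed
  then have cC: "c \<in> Cset" using cc ce Hc by (simp add: Cset_def)
  have "c \<otimes>\<^bsub>HG\<^esub> phi \<gamma> = (\<tau>, k) \<otimes>\<^bsub>HG\<^esub> (phi (ginv \<gamma>) \<otimes>\<^bsub>HG\<^esub> phi \<gamma>)"
    unfolding c_def using monoid.m_assoc[OF H_monoid] tk phi_car[OF giK] phi_car[OF gK] Hc by simp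
  also have "\<dots> = (\<tau>, k) \<otimes>\<^bsub>HG\<^esub> phi (ginv \<gamma> \<circ> \<gamma>)" using phi_mult[OF giK gK] by simp
  also have "\<dots> = (\<tau>, k)" using ginv_comp1[OF ga] phi_id monoid.r_one[OF H_monoid] tk Hc by simp
  finally show ?thesis using cC gK by metis
qed

lemma carrier_decomp: "carrier HG = {c \<otimes>\<^bsub>HG\<^esub> \<gamma> | c \<gamma>. c \<in> Cset \<and> \<gamma> \<in> phi ` K}"
proof
  show "carrier HG \<subseteq> {c \<otimes>\<^bsub>HG\<^esub> \<gamma> | c \<gamma>. c \<in> Cset \<and> \<gamma> \<in> phi ` K}"
  proof
    fix x assume x: "x \<in> carrier HG"
    obtain \<tau> k where "x = (\<tau>, k)" by (cases x)
    then show "x \<in> {c \<otimes>\<^bsub>HG\<^esub> \<gamma> | c \<gamma>. c \<in> Cset \<and> \<gamma> \<in> phi ` K}"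
      using decomp x Hc by blast
  qed
  show "{c \<otimes>\<^bsub>HG\<^esub> \<gamma> | c \<gamma>. c \<in> Cset \<and> \<gamma> \<in> phi ` K} \<subseteq> carrier HG"
  proof
    fix y assume "y \<in> {c \<otimes>\<^bsub>HG\<^esub> \<gamma> | c \<gamma>. c \<in> Cset \<and> \<gamma> \<in> phi ` K}"
    then obtain c g where cg: "c \<in> Cset" "g \<in> K" "y = c \<otimes>\<^bsub>HG\<^esub> phi g" by blast
    have "c \<in> carrier HG" using cg(1) Hc by (auto simp: Cset_def)
    moreover have "phi g \<in> carrier HG" using phi_car[OF cg(2)] Hc by simp
    ultimately show "y \<in> carrier HG" using monoid.m_closed[OF H_monoid] cg(3) by simp
  qed
qed


section \<open>Compactness of Cset\<close>

definition PQ :: "((nat \<Rightarrow> nat) \<times> ('a \<Rightarrow> 'a)) set" where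
  "PQ = {p. p permutes {..<n} \<and> p 0 = 0} \<times> {q. bij q}"

definition XT where "XT = product_topology (\<lambda>v. discrete_topology PQ) tv"

definition bq :: "('a list \<Rightarrow> ('a \<Rightarrow> 'a)) \<Rightarrow> 'a list \<Rightarrow> ('a \<Rightarrow> 'a)" where
  "bq q w = (if bij (q w) then q w else id)"

definition BT where "BT q = Build (bq q v0) (\<lambda>w a b. adj (bq q w) a b) v0"

definition Psi where "Psi z = ((\<lambda>v. if v \<in> tv then fst (z v) else id), BT (\<lambda>w. snd (z w)))"

lemma BT_build: "build (bq q v0) (\<lambda>w a b. adj (bq q w) a b) v0"
  by unfold_locales (simp_all add: bq_def adj_bij adj_val v0)

lemma BT_aut: "BT q \<in> tree_aut" unfolding BT_def by (rule build.B_aut[OF BT_build])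
lemma BT_v0: "BT q v0 = v0" unfolding BT_def by (rule build.B_u[OF BT_build])

lemma topX: "topspace XT = (\<Pi>\<^sub>E v\<in>tv. PQ)" by (simp add: XT_def)

lemma Psi_C: assumes z: "z \<in> topspace XT" shows "Psi z \<in> Cset"
proof -
  have zv0: "\<And>v. v \<in> tv \<Longrightarrow> z v \<in> PQ" using z topX by (auto simp: PiE_def Pi_def)
  have zv: "\<And>v. v \<in> tv \<Longrightarrow> fst (z v) permutes {..<n} \<and> fst (z v) 0 = 0"
    using zv0 by (auto simp: PQ_def mem_Times_iff)
  have "{v \<in> tv. (if v \<in> tv then fst (z v) else id) 0 \<noteq> 0} = {}" using zv by auto
  then show ?thesis using zv BT_aut BT_v0
    by (auto simp: Psi_def Cset_def Hcar)
qed

lemma aut_eq_lp: assumes "x \<in> tree_aut" "y \<in> tree_aut" "x v0 = y v0" "\<And>w. w \<in> tv \<Longrightarrow> local_perm x w = local_perm y w"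
  shows "x = y"
proof (rule uniq[OF assms(1-3)])
  show "local_perm x v0 = local_perm y v0" using assms(4) v0 by blast
  fix w :: "'a list" assume w: "w \<in> tv"
  show "\<exists>f\<in>F. local_perm y w = local_perm x w \<circ> f" using Fid assms(4)[OF w] by (metis comp_id)
qed

lemma C_sub: "Cset \<subseteq> Psi ` topspace XT"
proof
  fix x assume x: "x \<in> Cset"
  obtain \<tau> k where xe: "x = (\<tau>, k)" by (cases x)
  have tk: "(\<tau>, k) \<in> H_carrier n v0" "\<forall>v\<in>tv. \<tau> v 0 = 0" using x xe by (auto simp: Cset_def)
  have ka: "k \<in> tree_aut" "k v0 = v0" using tk Hcar by auto
  define z where "z = (\<lambda>v. if v \<in> tv then (\<tau> v, local_perm k v) else undefined)"
  have zX: "z \<in> topspace XT" using tk ka lp_bij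
    by (auto simp: topX z_def PQ_def Hcar)
  define q where "q = (\<lambda>w. snd (z w))"
  have qv: "bq q w = local_perm k w" if "w \<in> tv" for w
    using that lp_bij[OF ka(1) that] by (simp add: bq_def q_def z_def)
  interpret BB: build "bq q v0" "\<lambda>w a b. adj (bq q w) a b" v0 by (rule BT_build)
  have Lk: "Lr (bq q v0) (\<lambda>w a b. adj (bq q w) a b) v0 w' = local_perm k (Rm v0 w')" if "w' \<in> tv" for w'
    using that
  proof (induction w')
    case Nil then show ?case using qv v0 by simp
  next
    case (Cons a w')
    then have w': "w' \<in> tv" by (simp add: tv_Cons)
    have IH: "Lr (bq q v0) (\<lambda>w a b. adj (bq q w) a b) v0 w' = local_perm k (Rm v0 w')" using Cons.IH w' by blast
    have t: "Rm v0 (a # w') \<in> tv" using v0 by simp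
    have "local_perm k (nbr a (Rm v0 w')) a = local_perm k (Rm v0 w') a" using lp_back[OF ka(1)] v0 by simp
    then show ?case using IH qv[OF t] by (simp add: adj_same)
  qed
  have "BT q = k"
  proof (rule aut_eq_lp[OF BT_aut ka(1)])
    show "BT q v0 = k v0" using BT_v0 ka by simp
    fix w :: "'a list" assume w: "w \<in> tv"
    have "local_perm (BT q) w = Lr (bq q v0) (\<lambda>w a b. adj (bq q w) a b) v0 (Rm (rev v0) w)"
      unfolding BT_def by (rule BB.B_lp[OF w])
    also have "\<dots> = local_perm k (Rm v0 (Rm (rev v0) w))" using Lk Rm_tv[OF tv_rev[OF v0]] by simp
    also have "\<dots> = local_perm k w" using Rm_inv2[OF v0 w] by simp
    finally show "local_perm (BT q) w = local_perm k w" .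
  qed
  moreover have "(\<lambda>v. if v \<in> tv then fst (z v) else id) = \<tau>"
    using tk Hcar by (auto simp: z_def)
  ultimately have "Psi z = x" using xe by (simp add: Psi_def q_def)
  then show "x \<in> Psi ` topspace XT" using zX by blast
qed

lemma Psi_img: "Psi ` topspace XT = Cset" using Psi_C C_sub by blast

lemma compact_XT: "compact_space XT"
proof -
  have "finite PQ"
  proof -
    have "finite {p. p permutes {..<(n::nat)}}" by (rule finite_permutations) simp
    then have "finite {p. p permutes {..<n} \<and> p 0 = (0::nat)}" by (rule finite_subset[rotated]) auto
    then show ?thesis unfolding PQ_def by simp
  qed
  then show ?thesis unfolding XT_def by (simp add: compact_space_product_topology compact_space_discrete_topology)
qed

lemma Lr_local:
  "(\<forall>i. q (Rm v0 (drop i w')) = q' (Rm v0 (drop i w'))) \<Longrightarrow>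
     Lr (bq q v0) (\<lambda>w a b. adj (bq q w) a b) v0 w' = Lr (bq q' v0) (\<lambda>w a b. adj (bq q' w) a b) v0 w'
   \<and> g0 (bq q v0) (\<lambda>w a b. adj (bq q w) a b) v0 w' = g0 (bq q' v0) (\<lambda>w a b. adj (bq q' w) a b) v0 w'"
proof (induction w')
  case Nil
  then have "q v0 = q' v0" by (metis drop_Nil Rm_Nil)
  then show ?case by (simp add: bq_def)
next
  case (Cons a w)
  have h: "\<forall>i. q (Rm v0 (drop i w)) = q' (Rm v0 (drop i w))"
  proof
    fix i show "q (Rm v0 (drop i w)) = q' (Rm v0 (drop i w))" using Cons.prems[rule_format, of "Suc i"] by simp
  qed
  have "q (Rm v0 (a # w)) = q' (Rm v0 (a # w))" using Cons.prems[rule_format, of 0] by simp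
  then have "bq q (Rm v0 (a # w)) = bq q' (Rm v0 (a # w))" by (simp add: bq_def)
  then show ?case using Cons.IH[OF h] by simp
qed

lemma drop_in: "drop i w \<in> (\<lambda>j. drop j w) ` {..length w}"
proof (cases "i \<le> length w")
  case True then show ?thesis by blast
next
  case False then have "drop i w = drop (length w) w" by simp
  then show ?thesis by blast
qed

definition Dv where "Dv v = Rm v0 ` ((\<lambda>j. drop j (Rm (rev v0) v)) ` {..length (Rm (rev v0) v)})"

lemma Dv: "finite (Dv v)" "Dv v \<subseteq> tv" using v0 by (auto simp: Dv_def)

lemma BT_local: assumes v: "v \<in> tv" and agree: "\<And>w. w \<in> Dv v \<Longrightarrow> q w = q' w"
  shows "BT q v = BT q' v"
proof -
  have "\<forall>i. q (Rm v0 (drop i (Rm (rev v0) v))) = q' (Rm v0 (drop i (Rm (rev v0) v)))"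
  proof
    fix i
    have "Rm v0 (drop i (Rm (rev v0) v)) \<in> Dv v" unfolding Dv_def using drop_in by (rule imageI)
    then show "q (Rm v0 (drop i (Rm (rev v0) v))) = q' (Rm v0 (drop i (Rm (rev v0) v)))" by (rule agree)
  qed
  from conjunct2[OF Lr_local[OF this]] show ?thesis using v by (simp add: BT_def Build_def)
qed

lemma Psi_cont: "continuous_map XT (H_topology n v0) Psi"
  unfolding H_topology_def
proof (rule continuous_on_generated_topo)
  show "Psi ` topspace XT \<subseteq> \<Union> {H_basic_open n v0 \<sigma> g S | \<sigma> g S. (\<sigma>, g) \<in> H_carrier n v0 \<and> finite S \<and> S \<subseteq> tv}"
  proof
    fix y assume "y \<in> Psi ` topspace XT"
    then have y: "y \<in> H_carrier n v0" using Psi_img by (auto simp: Cset_def)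
    obtain \<sigma> g where ye: "y = (\<sigma>, g)" by (cases y)
    have "y \<in> H_basic_open n v0 \<sigma> g {}" using y ye by (simp add: H_basic_open_def)
    then show "y \<in> \<Union> {H_basic_open n v0 \<sigma> g S | \<sigma> g S. (\<sigma>, g) \<in> H_carrier n v0 \<and> finite S \<and> S \<subseteq> tv}"
      using y ye by blast
  qed
next
  fix U assume "U \<in> {H_basic_open n v0 \<sigma> g S | \<sigma> g S. (\<sigma>, g) \<in> H_carrier n v0 \<and> finite S \<and> S \<subseteq> tv}"
  then obtain \<sigma> g S where U: "U = H_basic_open n v0 \<sigma> g S" "(\<sigma>, g) \<in> H_carrier n v0" "finite S" "S \<subseteq> tv"
    by blast
  show "openin XT (Psi -` U \<inter> topspace XT)"
  proof (subst openin_subopen, intro ballI)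
    fix z0 assume z0: "z0 \<in> Psi -` U \<inter> topspace XT"
    define D where "D = S \<union> (\<Union>v\<in>S. Dv v)"
    have D: "finite D" "D \<subseteq> tv" using U Dv by (auto simp: D_def)
    define T where "T = (\<Pi>\<^sub>E v\<in>tv. if v \<in> D then {z0 v} else PQ)"
    have z0X: "\<And>v. v \<in> tv \<Longrightarrow> z0 v \<in> PQ" using z0 topX by (auto simp: PiE_def Pi_def)
    have "openin XT T" unfolding XT_def T_def
    proof (rule product_topology_basis)
      fix i show "openin (discrete_topology PQ) (if i \<in> D then {z0 i} else PQ)"
        using z0X D by auto
    next
      show "finite {i. (if i \<in> D then {z0 i} else PQ) \<noteq> topspace (discrete_topology PQ)}"
        by (rule finite_subset[OF _ D(1)]) auto
    qed
    moreover have "z0 \<in> T" using z0 topX by (auto simp: T_def PiE_def Pi_def)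
    moreover have "T \<subseteq> Psi -` U \<inter> topspace XT"
    proof
      fix z assume z: "z \<in> T"
      have zX: "z \<in> topspace XT" using z z0X by (auto simp: T_def topX PiE_def Pi_def split: if_splits)
      have zD: "\<And>v. v \<in> D \<Longrightarrow> z v = z0 v" using z D by (auto simp: T_def PiE_def Pi_def)
      have Pz0: "Psi z0 \<in> U" using z0 by simp
      have PzC: "Psi z \<in> Cset" "Psi z0 \<in> Cset" using Psi_C zX z0 by auto
      have c1: "\<forall>v\<in>tv. fst (Psi z) v 0 = \<sigma> v 0"
      proof
        fix v :: "'a list" assume v: "v \<in> tv"
        have "fst (Psi z) v 0 = 0" "fst (Psi z0) v 0 = 0" using PzC v
          by (auto simp: Cset_def split: prod.splits)
        moreover have "fst (Psi z0) v 0 = \<sigma> v 0" using Pz0 v U(1)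
          by (auto simp: H_basic_open_def split: prod.splits)
        ultimately show "fst (Psi z) v 0 = \<sigma> v 0" by simp
      qed
      have c2: "\<forall>v\<in>S. fst (Psi z) v = \<sigma> v \<and> snd (Psi z) v = g v"
      proof
        fix v assume v: "v \<in> S"
        have vt: "v \<in> tv" using v U(4) by blast
        have f1: "fst (Psi z) v = fst (Psi z0) v" using zD[of v] v vt by (simp add: Psi_def D_def)
        have dd: "\<And>w. w \<in> Dv v \<Longrightarrow> snd (z w) = snd (z0 w)"
        proof -
          fix w assume "w \<in> Dv v" then have "w \<in> D" using v by (auto simp: D_def)
          then show "snd (z w) = snd (z0 w)" using zD by simp
        qed
        moreover have "snd (Psi z) v = snd (Psi z0) v"
          using BT_local[OF vt, of "\<lambda>w. snd (z w)" "\<lambda>w. snd (z0 w)"] dd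
          by (simp add: Psi_def)
        moreover have "fst (Psi z0) v = \<sigma> v \<and> snd (Psi z0) v = g v" using Pz0 v U(1)
          by (auto simp: H_basic_open_def split: prod.splits)
        ultimately show "fst (Psi z) v = \<sigma> v \<and> snd (Psi z) v = g v" using f1 by simp
      qed
      have "Psi z \<in> H_carrier n v0" using PzC by (auto simp: Cset_def)
      then have "Psi z \<in> U" using c1 c2 U(1) by (auto simp: H_basic_open_def split: prod.splits)
      then show "z \<in> Psi -` U \<inter> topspace XT" using zX by simp
    qed
    ultimately show "\<exists>T. openin XT T \<and> z0 \<in> T \<and> T \<subseteq> Psi -` U \<inter> topspace XT" by blast
  qed
qed

lemma Cset_compact: "compactin (H_topology n v0) Cset"
proof -
  have "compactin XT (topspace XT)" using compact_XT by (simp add: compact_space_def)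
  from image_compactin[OF this Psi_cont] show ?thesis using Psi_img by simp
qed

lemma main: "\<exists>\<phi>. \<phi> \<in> hom (KFF_group F F' v0) (H_group n v0) \<and> inj_on \<phi> (carrier (KFF_group F F' v0))
           \<and> cocompact_lattice (H_group n v0) (H_topology n v0) (\<phi> ` carrier (KFF_group F F' v0))"
proof (intro exI conjI)
  show "phi \<in> hom (KFF_group F F' v0) (H_group n v0)" by (rule phi_hom)
  show "inj_on phi K" by (rule phi_inj)
  show "cocompact_lattice HG (H_topology n v0) (phi ` K)"
    unfolding cocompact_lattice_def
    using Gamma_subgroup discrete Cset_compact carrier_decomp by blast
qed

end


theorem proposition3:
  fixes F F' :: "('a::finite \<Rightarrow> 'a) set" and v0 :: "'a list" and n :: nat
  assumes "CARD('a) \<ge> 3"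
    and "subgroup F (BijGroup (UNIV :: 'a set))"
    and "subgroup F' (BijGroup (UNIV :: 'a set))"
    and "F \<subseteq> F'"
    and "semiregular F"
    and "preserves_orbits F' F"
    and "n = card (rcosets\<^bsub>(BijGroup (UNIV :: 'a set))\<lparr>carrier := F'\<rparr>\<^esub> F)"
    and "v0 \<in> tree_vertices"
  shows "\<exists>\<phi>. \<phi> \<in> hom (KFF_group F F' v0) (H_group n v0)
           \<and> inj_on \<phi> (carrier (KFF_group F F' v0))
           \<and> cocompact_lattice (H_group n v0) (H_topology n v0) (\<phi> ` carrier (KFF_group F F' v0))"
proof -
  interpret P3 F F' n v0 by (rule P3.intro) (rule assms)+
  show ?thesis by (rule main)
qed

end
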